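(* Let $S$ be a Polish space and $\mu_0$ a diffuse probability measure on $S$. Let $\boldsymbol{\mu}$ be an exchangeable stick-breaking process (ESB) with base measure $\mu_0$ and exchangeable length variables $(\mathbf{v}_i)_{i\ge1}$ such that marginally $\mathbf{v}_i\sim\mathrm{Be}(a,b)$ for some $a,b>0$. Then $\boldsymbol{\mu}$ is proper and has full support.
   Context: A species sampling process on $S$ with diffuse base measure $\mu_0$ is a random probability measure $\boldsymbol{\mu}=\sum_{j\ge1}\mathbf{w}_j\delta_{\boldsymbol{\xi}_j}+(1-\sum_{j}\mathbf{w}_j)\mu_0$, where $\mathbf{w}_j\ge0$, $\sum_j\mathbf{w}_j\le1$ a.s., and the weights are independent of the i.i.d. atoms $\boldsymbol{\xi}_j\sim\mu_0$. It is proper if $\sum_j\mathbf{w}_j=1$ a.s. An ESB is such a process with weights $\mathbf{w}_1=\mathbf{v}_1$, $\mathbf{w}_j=\mathbf{v}_j\prod_{i<j}(1-\mathbf{v}_i)$, where $(\mathbf{v}_i)_{i\ge1}$ is an exchangeable sequence of $[0,1]$-valued random variables. $\mathrm{Be}(a,b)$ is the Beta distribution. "Full support" means the weak-topology support of the law of $\boldsymbol{\mu}$ is the set of all probability measures whose support is contained in the support of $\mu_0$. *)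

theory Defs
  imports "HOL-Probability.Probability"
begin

definition beta_density :: "real \<Rightarrow> real \<Rightarrow> real \<Rightarrow> real" where
  "beta_density a b x =
     indicator {0<..<1} x * x powr (a - 1) * (1 - x) powr (b - 1) / Beta a b"

definition exchangeable :: "'w measure \<Rightarrow> (nat \<Rightarrow> 'w \<Rightarrow> real) \<Rightarrow> bool" where
  "exchangeable M v \<longleftrightarrow>
     (\<forall>i. v i \<in> borel_measurable M) \<and>
     (\<forall>n \<pi>. \<pi> permutes {..<n} \<longrightarrow>
        distr M (PiM UNIV (\<lambda>_. borel)) (\<lambda>\<omega> i. v (\<pi> i) \<omega>)
          = distr M (PiM UNIV (\<lambda>_. borel)) (\<lambda>\<omega> i. v i \<omega>))"

text \<open>Stick-breaking weights (indices start at 0): w_0 = v_0, w_j = v_j prod_{i<j} (1 - v_i).\<close>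
definition sb_weight :: "(nat \<Rightarrow> 'w \<Rightarrow> real) \<Rightarrow> nat \<Rightarrow> 'w \<Rightarrow> real" where
  "sb_weight v j \<omega> = v j \<omega> * (\<Prod>i<j. 1 - v i \<omega>)"

definition ssp_measure :: "'a measure \<Rightarrow> (nat \<Rightarrow> real) \<Rightarrow> (nat \<Rightarrow> 'a) \<Rightarrow> 'a measure" where
  "ssp_measure \<mu>0 w \<xi> = measure_of (space \<mu>0) (sets \<mu>0)
     (\<lambda>A. (\<Sum>j. ennreal (w j) * indicator A (\<xi> j))
          + ennreal (1 - (\<Sum>j. w j)) * emeasure \<mu>0 A)"

definition msupport :: "'a::topological_space measure \<Rightarrow> 'a set" where
  "msupport \<nu> = {x. \<forall>U. open U \<longrightarrow> x \<in> U \<longrightarrow> emeasure \<nu> U > 0}"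

definition diffuse :: "'a measure \<Rightarrow> bool" where
  "diffuse \<mu> \<longleftrightarrow> (\<forall>x. emeasure \<mu> {x} = 0)"

text \<open>nu lies in the (weak-topology) support of the law of the random measure
  mu: every basic weak neighbourhood of nu, determined by finitely many bounded
  continuous functions f_0..f_{k-1} and a radius e > 0, has positive probability.\<close>
definition in_law_support ::
  "'w measure \<Rightarrow> ('w \<Rightarrow> 'a::topological_space measure) \<Rightarrow> 'a measure \<Rightarrow> bool" where
  "in_law_support M \<mu> \<nu> \<longleftrightarrow>
     (\<forall>k (f :: nat \<Rightarrow> 'a \<Rightarrow> real) (e::real).
        (\<forall>i<k. continuous_on UNIV (f i) \<and> bounded (range (f i))) \<longrightarrow> e > 0 \<longrightarrow>
        measure M {\<omega>\<in>space M. \<forall>i<k.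
            \<bar>(\<integral>x. f i x \<partial>(\<mu> \<omega>)) - (\<integral>x. f i x \<partial>\<nu>)\<bar> < e} > 0)"

text \<open>Independence of two random elements with possibly different value spaces
  (same as the library's indep_var, which requires equal value types).\<close>
definition indep_rv :: "'w measure \<Rightarrow> 'b measure \<Rightarrow> ('w \<Rightarrow> 'b) \<Rightarrow> 'c measure \<Rightarrow> ('w \<Rightarrow> 'c) \<Rightarrow> bool" where
  "indep_rv M S X T Y \<longleftrightarrow>
     X \<in> measurable M S \<and> Y \<in> measurable M T \<and>
     prob_space.indep_set M
       (sigma_sets (space M) {X -` A \<inter> space M | A. A \<in> sets S})
       (sigma_sets (space M) {Y -` A \<inter> space M | A. A \<in> sets T})"

end

theory Submission
  imports Defs
begin

lemma suminf_swap_ennreal: "(\<Sum>i. \<Sum>j. f i j :: ennreal) = (\<Sum>j. \<Sum>i. f i j)"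
proof -
  have "(\<Sum>i. \<Sum>j. f i j) = (\<Sum>i. \<integral>\<^sup>+j. f i j \<partial>count_space UNIV)"
    by (simp add: nn_integral_count_space_nat)
  also have "\<dots> = \<integral>\<^sup>+j. (\<Sum>i. f i j) \<partial>count_space UNIV"
    by (rule nn_integral_suminf[symmetric]) simp
  also have "\<dots> = (\<Sum>j. \<Sum>i. f i j)" by (simp add: nn_integral_count_space_nat)
  finally show ?thesis .
qed

lemma ssp_sets[simp]: "sets (ssp_measure \<mu>0 w \<xi>) = sets \<mu>0"
  unfolding ssp_measure_def by (simp add: sets.sets_measure_of_eq)

lemma ssp_space[simp]: "space (ssp_measure \<mu>0 w \<xi>) = space \<mu>0"
  unfolding ssp_measure_def by (simp add: sets.space_measure_of_eq)

lemma ssp_emeasure: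
  assumes "A \<in> sets \<mu>0"
  shows "emeasure (ssp_measure \<mu>0 w \<xi>) A =
    (\<Sum>j. ennreal (w j) * indicator A (\<xi> j)) + ennreal (1 - suminf w) * emeasure \<mu>0 A"
  unfolding ssp_measure_def
proof (rule emeasure_measure_of_sigma[OF sets.sigma_algebra_axioms _ _ assms])
  show "positive (sets \<mu>0) (\<lambda>A. (\<Sum>j. ennreal (w j) * indicator A (\<xi> j)) + ennreal (1 - suminf w) * emeasure \<mu>0 A)"
    unfolding positive_def by simp
  show "countably_additive (sets \<mu>0) (\<lambda>A. (\<Sum>j. ennreal (w j) * indicator A (\<xi> j)) + ennreal (1 - suminf w) * emeasure \<mu>0 A)"
    unfolding countably_additive_def
  proof (intro allI impI)
    fix A :: "nat \<Rightarrow> _" assume A: "range A \<subseteq> sets \<mu>0" "disjoint_family A" "\<Union> (range A) \<in> sets \<mu>0"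
    have "(\<Sum>i. (\<Sum>j. ennreal (w j) * indicator (A i) (\<xi> j)) + ennreal (1 - suminf w) * emeasure \<mu>0 (A i))
       = (\<Sum>i. \<Sum>j. ennreal (w j) * indicator (A i) (\<xi> j)) + (\<Sum>i. ennreal (1 - suminf w) * emeasure \<mu>0 (A i))"
      by (rule suminf_add[OF summableI summableI, symmetric])
    also have "(\<Sum>i. \<Sum>j. ennreal (w j) * indicator (A i) (\<xi> j)) = (\<Sum>j. \<Sum>i. ennreal (w j) * indicator (A i) (\<xi> j))"
      by (rule suminf_swap_ennreal)
    also have "\<dots> = (\<Sum>j. ennreal (w j) * indicator (\<Union>i. A i) (\<xi> j))"
      by (simp add: ennreal_suminf_cmult suminf_indicator[OF A(2)])
    also have "(\<Sum>i. ennreal (1 - suminf w) * emeasure \<mu>0 (A i)) = ennreal (1 - suminf w) * emeasure \<mu>0 (\<Union>i. A i)"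
      using A by (simp add: ennreal_suminf_cmult suminf_emeasure)
    finally show "(\<Sum>i. (\<Sum>j. ennreal (w j) * indicator (A i) (\<xi> j)) + ennreal (1 - suminf w) * emeasure \<mu>0 (A i))
       = (\<Sum>j. ennreal (w j) * indicator (\<Union> (range A)) (\<xi> j)) + ennreal (1 - suminf w) * emeasure \<mu>0 (\<Union> (range A))" .
  qed
qed

lemma ssp_nn_integral:
  assumes g: "g \<in> borel_measurable \<mu>0" and xi: "\<And>j. \<xi> j \<in> space \<mu>0"
  shows "(\<integral>\<^sup>+x. g x \<partial>ssp_measure \<mu>0 w \<xi>) =
    (\<Sum>j. ennreal (w j) * g (\<xi> j)) + ennreal (1 - suminf w) * (\<integral>\<^sup>+x. g x \<partial>\<mu>0)"
  using g
proof (induction rule: borel_measurable_induct)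
  case (cong f g)
  have "(\<integral>\<^sup>+x. f x \<partial>ssp_measure \<mu>0 w \<xi>) = (\<integral>\<^sup>+x. g x \<partial>ssp_measure \<mu>0 w \<xi>)"
    by (rule nn_integral_cong) (simp add: cong)
  moreover have "(\<integral>\<^sup>+x. f x \<partial>\<mu>0) = (\<integral>\<^sup>+x. g x \<partial>\<mu>0)"
    by (rule nn_integral_cong) (simp add: cong)
  moreover have "\<And>j. f (\<xi> j) = g (\<xi> j)" using cong xi by simp
  ultimately show ?case using cong by simp
next
  case (set A)
  have "A \<in> sets (ssp_measure \<mu>0 w \<xi>)" using set by simp
  then show ?case using set by (simp add: ssp_emeasure)
next
  case (mult u c)
  have m: "u \<in> borel_measurable (ssp_measure \<mu>0 w \<xi>)"
    using mult(2) by (simp cong: measurable_cong_sets)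
  have "(\<integral>\<^sup>+x. c * u x \<partial>ssp_measure \<mu>0 w \<xi>) = c * (\<integral>\<^sup>+x. u x \<partial>ssp_measure \<mu>0 w \<xi>)"
    by (rule nn_integral_cmult[OF m])
  also have "\<dots> = c * (\<Sum>j. ennreal (w j) * u (\<xi> j)) + c * (ennreal (1 - suminf w) * (\<integral>\<^sup>+x. u x \<partial>\<mu>0))"
    using mult(4) by (simp only: distrib_left)
  also have "c * (\<Sum>j. ennreal (w j) * u (\<xi> j)) = (\<Sum>j. ennreal (w j) * (c * u (\<xi> j)))"
  proof -
    have "(\<Sum>j. ennreal (w j) * (c * u (\<xi> j))) = (\<Sum>j. c * (ennreal (w j) * u (\<xi> j)))"
      by (simp only: mult.left_commute)
    also have "\<dots> = c * (\<Sum>j. ennreal (w j) * u (\<xi> j))" by (rule ennreal_suminf_cmult)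
    finally show ?thesis by simp
  qed
  also have "c * (ennreal (1 - suminf w) * (\<integral>\<^sup>+x. u x \<partial>\<mu>0)) = ennreal (1 - suminf w) * (\<integral>\<^sup>+x. c * u x \<partial>\<mu>0)"
    using mult by (simp add: nn_integral_cmult mult_ac)
  finally show ?case .
next
  case (add u v)
  have m: "u \<in> borel_measurable (ssp_measure \<mu>0 w \<xi>)" "v \<in> borel_measurable (ssp_measure \<mu>0 w \<xi>)"
    using add by (simp_all cong: measurable_cong_sets)
  have "(\<integral>\<^sup>+x. v x + u x \<partial>ssp_measure \<mu>0 w \<xi>) = (\<integral>\<^sup>+x. v x \<partial>ssp_measure \<mu>0 w \<xi>) + (\<integral>\<^sup>+x. u x \<partial>ssp_measure \<mu>0 w \<xi>)"
    by (rule nn_integral_add) (use m in auto)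
  also have "\<dots> = ((\<Sum>j. ennreal (w j) * v (\<xi> j)) + (\<Sum>j. ennreal (w j) * u (\<xi> j)))
      + ennreal (1 - suminf w) * ((\<integral>\<^sup>+x. v x \<partial>\<mu>0) + (\<integral>\<^sup>+x. u x \<partial>\<mu>0))"
    using add by (simp add: distrib_left algebra_simps)
  also have "(\<Sum>j. ennreal (w j) * v (\<xi> j)) + (\<Sum>j. ennreal (w j) * u (\<xi> j)) = (\<Sum>j. ennreal (w j) * (v (\<xi> j) + u (\<xi> j)))"
    by (simp add: suminf_add[OF summableI summableI] distrib_left)
  also have "(\<integral>\<^sup>+x. v x \<partial>\<mu>0) + (\<integral>\<^sup>+x. u x \<partial>\<mu>0) = (\<integral>\<^sup>+x. v x + u x \<partial>\<mu>0)"
    by (rule nn_integral_add[symmetric]) (use add in auto)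
  finally show ?case by simp
next
  case (seq U)
  have supx: "\<And>x. (SUP i. U i) x = (SUP i. U i x)" by (rule SUP_apply)
  have inc: "\<And>m n x. m \<le> n \<Longrightarrow> U m x \<le> U n x" using \<open>incseq U\<close> by (auto simp: incseq_def le_fun_def)
  have m: "\<And>i. U i \<in> borel_measurable (ssp_measure \<mu>0 w \<xi>)"
    using seq by (simp cong: measurable_cong_sets)
  have "(\<integral>\<^sup>+x. (SUP i. U i) x \<partial>ssp_measure \<mu>0 w \<xi>) = (\<integral>\<^sup>+x. (SUP i. U i x) \<partial>ssp_measure \<mu>0 w \<xi>)"
    by (simp only: supx)
  also have "\<dots> = (SUP i. \<integral>\<^sup>+x. U i x \<partial>ssp_measure \<mu>0 w \<xi>)"
    by (rule nn_integral_monotone_convergence_SUP) (use inc m in \<open>auto simp: incseq_def le_fun_def\<close>)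
  also have "\<dots> = (SUP i. (\<Sum>j. ennreal (w j) * U i (\<xi> j)) + ennreal (1 - suminf w) * (\<integral>\<^sup>+x. U i x \<partial>\<mu>0))"
    using seq by simp
  also have "\<dots> = (SUP i. (\<Sum>j. ennreal (w j) * U i (\<xi> j))) + (SUP i. ennreal (1 - suminf w) * (\<integral>\<^sup>+x. U i x \<partial>\<mu>0))"
  proof (rule ennreal_SUP_add)
    show "incseq (\<lambda>i. \<Sum>j. ennreal (w j) * U i (\<xi> j))"
      using inc by (auto simp: incseq_def intro!: suminf_le mult_left_mono)
    show "incseq (\<lambda>i. ennreal (1 - suminf w) * (\<integral>\<^sup>+x. U i x \<partial>\<mu>0))"
      using inc by (auto simp: incseq_def intro!: mult_left_mono nn_integral_mono)
  qed
  also have "(SUP i. (\<Sum>j. ennreal (w j) * U i (\<xi> j))) = (\<Sum>j. ennreal (w j) * (SUP i. U i) (\<xi> j))"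
  proof -
    have "(SUP i. (\<Sum>j. ennreal (w j) * U i (\<xi> j))) = (SUP i. \<integral>\<^sup>+j. ennreal (w j) * U i (\<xi> j) \<partial>count_space UNIV)"
      by (simp add: nn_integral_count_space_nat)
    also have "\<dots> = \<integral>\<^sup>+j. (SUP i. ennreal (w j) * U i (\<xi> j)) \<partial>count_space UNIV"
      by (rule nn_integral_monotone_convergence_SUP[symmetric])
         (use inc in \<open>auto simp: incseq_def le_fun_def intro!: mult_left_mono\<close>)
    also have "\<dots> = (\<Sum>j. ennreal (w j) * (SUP i. U i) (\<xi> j))"
      by (simp add: nn_integral_count_space_nat supx SUP_mult_left_ennreal image_comp del: SUP_apply)
    finally show ?thesis .
  qed
  also have "(SUP i. ennreal (1 - suminf w) * (\<integral>\<^sup>+x. U i x \<partial>\<mu>0)) = ennreal (1 - suminf w) * (\<integral>\<^sup>+x. (SUP i. U i) x \<partial>\<mu>0)"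
  proof -
    have "(\<integral>\<^sup>+x. (SUP i. U i) x \<partial>\<mu>0) = (SUP i. \<integral>\<^sup>+x. U i x \<partial>\<mu>0)"
      unfolding supx
      by (rule nn_integral_monotone_convergence_SUP) (use inc seq in \<open>auto simp: incseq_def\<close>)
    then show ?thesis by (simp add: SUP_mult_left_ennreal)
  qed
  finally show ?case .
qed

lemma ssp_prob:
  assumes "prob_space \<mu>0" "\<And>j. 0 \<le> w j" "summable w" "suminf w \<le> 1" "\<And>j. \<xi> j \<in> space \<mu>0"
  shows "prob_space (ssp_measure \<mu>0 w \<xi>)"
proof (rule prob_spaceI)
  interpret prob_space \<mu>0 by fact
  have "emeasure (ssp_measure \<mu>0 w \<xi>) (space (ssp_measure \<mu>0 w \<xi>)) =
     (\<Sum>j. ennreal (w j)) + ennreal (1 - suminf w)"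
    using assms(5) by (simp add: ssp_emeasure emeasure_space_1)
  also have "\<dots> = ennreal (suminf w) + ennreal (1 - suminf w)"
    using assms by (simp add: suminf_ennreal2)
  also have "\<dots> = 1" using assms by (simp add: ennreal_plus[symmetric] suminf_nonneg del: ennreal_plus)
  finally show "emeasure (ssp_measure \<mu>0 w \<xi>) (space (ssp_measure \<mu>0 w \<xi>)) = 1" .
qed

lemma ssp_integral:
  assumes P: "prob_space \<mu>0" and w: "\<And>j. 0 \<le> w j" "summable w" "suminf w \<le> 1"
    and xi: "\<And>j. \<xi> j \<in> space \<mu>0"
    and f: "f \<in> borel_measurable \<mu>0" and B: "\<And>x. x \<in> space \<mu>0 \<Longrightarrow> \<bar>f x\<bar> \<le> B"
  shows "integral\<^sup>L (ssp_measure \<mu>0 w \<xi>) f = (\<Sum>j. w j * f (\<xi> j)) + (1 - suminf w) * integral\<^sup>L \<mu>0 f"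
proof -
  interpret prob_space \<mu>0 by fact
  interpret S: prob_space "ssp_measure \<mu>0 w \<xi>" by (rule ssp_prob[OF P w xi])
  have B0: "0 \<le> B" using B[OF xi[of 0]] by simp
  define g where "g x = f x + B" for x
  have g0: "x \<in> space \<mu>0 \<Longrightarrow> 0 \<le> g x" for x using B[of x] by (simp add: g_def)
  have gB: "x \<in> space \<mu>0 \<Longrightarrow> g x \<le> 2 * B" for x using B[of x] by (simp add: g_def)
  have gm: "g \<in> borel_measurable \<mu>0" using f unfolding g_def by (intro borel_measurable_add) auto
  have ig0: "0 \<le> integral\<^sup>L \<mu>0 g" using g0 by (simp add: integral_nonneg)
  have Sp: "S.prob (space \<mu>0) = 1" using S.prob_space by simp
  have gmS: "g \<in> borel_measurable (ssp_measure \<mu>0 w \<xi>)" using gm by (simp cong: measurable_cong_sets)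
  have fmS: "f \<in> borel_measurable (ssp_measure \<mu>0 w \<xi>)" using f by (simp cong: measurable_cong_sets)
  have intf: "integrable \<mu>0 f"
    by (rule integrable_const_bound[where B=B]) (use B f in auto)
  have intfS: "integrable (ssp_measure \<mu>0 w \<xi>) f"
    by (rule S.integrable_const_bound[where B=B]) (use B fmS in auto)
  have intg: "integrable \<mu>0 g" unfolding g_def using intf by simp
  have sumg: "summable (\<lambda>j. w j * g (\<xi> j))"
  proof (rule summable_comparison_test)
    have "norm (w n * g (\<xi> n)) \<le> 2 * B * w n" for n
    proof -
      have "norm (w n * g (\<xi> n)) = w n * g (\<xi> n)" using w(1)[of n] g0[OF xi[of n]] by simp
      also have "\<dots> \<le> w n * (2 * B)" by (rule mult_left_mono[OF gB[OF xi] w(1)])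
      finally show ?thesis by (simp add: mult_ac)
    qed
    then show "\<exists>N. \<forall>n\<ge>N. norm (w n * g (\<xi> n)) \<le> 2 * B * w n" by blast
    show "summable (\<lambda>n. 2 * B * w n)" using w(2) by (rule summable_mult)
  qed
  have "(\<integral>\<^sup>+x. ennreal (g x) \<partial>ssp_measure \<mu>0 w \<xi>) =
     (\<Sum>j. ennreal (w j) * ennreal (g (\<xi> j))) + ennreal (1 - suminf w) * (\<integral>\<^sup>+x. ennreal (g x) \<partial>\<mu>0)"
    by (rule ssp_nn_integral) (use gm xi in auto)
  also have "(\<Sum>j. ennreal (w j) * ennreal (g (\<xi> j))) = ennreal (\<Sum>j. w j * g (\<xi> j))"
  proof -
    have "\<And>j. ennreal (w j) * ennreal (g (\<xi> j)) = ennreal (w j * g (\<xi> j))"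
      by (rule ennreal_mult[symmetric]) (use w(1) g0[OF xi] in auto)
    then show ?thesis using w(1) g0[OF xi] sumg by (simp add: suminf_ennreal2)
  qed
  also have "(\<integral>\<^sup>+x. ennreal (g x) \<partial>\<mu>0) = ennreal (integral\<^sup>L \<mu>0 g)"
    by (rule nn_integral_eq_integral[OF intg]) (use g0 in auto)
  also have "ennreal (1 - suminf w) * ennreal (integral\<^sup>L \<mu>0 g) = ennreal ((1 - suminf w) * integral\<^sup>L \<mu>0 g)"
    by (rule ennreal_mult[symmetric]) (use w ig0 in auto)
  also have "ennreal (\<Sum>j. w j * g (\<xi> j)) + ennreal ((1 - suminf w) * integral\<^sup>L \<mu>0 g) =
      ennreal ((\<Sum>j. w j * g (\<xi> j)) + (1 - suminf w) * integral\<^sup>L \<mu>0 g)"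
    by (rule ennreal_plus[symmetric]) (use w g0 xi sumg ig0 in \<open>auto intro!: suminf_nonneg mult_nonneg_nonneg\<close>)
  finally have nn: "(\<integral>\<^sup>+x. ennreal (g x) \<partial>ssp_measure \<mu>0 w \<xi>) = ennreal ((\<Sum>j. w j * g (\<xi> j)) + (1 - suminf w) * integral\<^sup>L \<mu>0 g)" .
  have "integral\<^sup>L (ssp_measure \<mu>0 w \<xi>) g = enn2real (\<integral>\<^sup>+x. ennreal (g x) \<partial>ssp_measure \<mu>0 w \<xi>)"
    by (rule integral_eq_nn_integral[OF gmS]) (use g0 in auto)
  also have "\<dots> = (\<Sum>j. w j * g (\<xi> j)) + (1 - suminf w) * integral\<^sup>L \<mu>0 g"
    unfolding nn
    by (rule enn2real_ennreal) (use w g0 xi sumg ig0 in \<open>auto intro!: add_nonneg_nonneg suminf_nonneg mult_nonneg_nonneg\<close>)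
  finally have eqg: "integral\<^sup>L (ssp_measure \<mu>0 w \<xi>) g = (\<Sum>j. w j * g (\<xi> j)) + (1 - suminf w) * integral\<^sup>L \<mu>0 g" .
  have "integral\<^sup>L (ssp_measure \<mu>0 w \<xi>) g = integral\<^sup>L (ssp_measure \<mu>0 w \<xi>) f + B"
    unfolding g_def using intfS by (simp add: Sp)
  moreover have "integral\<^sup>L \<mu>0 g = integral\<^sup>L \<mu>0 f + B"
    unfolding g_def using intf by (simp add: prob_space)
  moreover have "(\<Sum>j. w j * g (\<xi> j)) = (\<Sum>j. w j * f (\<xi> j)) + B * suminf w"
  proof -
    have sf: "summable (\<lambda>j. w j * f (\<xi> j))"
    proof -
      have "summable (\<lambda>j. w j * g (\<xi> j) - B * w j)" using sumg w(2) by (intro summable_diff summable_mult)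
      then show ?thesis by (simp add: g_def algebra_simps)
    qed
    have "(\<Sum>j. w j * g (\<xi> j)) = (\<Sum>j. w j * f (\<xi> j) + B * w j)" by (simp add: g_def algebra_simps)
    also have "\<dots> = (\<Sum>j. w j * f (\<xi> j)) + (\<Sum>j. B * w j)"
      by (rule suminf_add[symmetric]) (use sf w(2) in \<open>auto intro: summable_mult\<close>)
    also have "(\<Sum>j. B * w j) = B * suminf w" by (rule suminf_mult[OF w(2)])
    finally show ?thesis .
  qed
  ultimately show ?thesis using eqg by (simp add: algebra_simps)
qed

lemma sum_sb_weight: "(\<Sum>j<n. sb_weight v j \<omega>) = 1 - (\<Prod>i<n. 1 - v i \<omega>)"
  by (induction n) (simp_all add: sb_weight_def algebra_simps)

lemma subset_sum_approx:
  fixes w :: "'j \<Rightarrow> real"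
  assumes "finite J" "\<And>j. j \<in> J \<Longrightarrow> 0 \<le> w j" "\<And>j. j \<in> J \<Longrightarrow> w j \<le> \<delta>" "0 \<le> \<delta>" "0 \<le> t" "t \<le> sum w J"
  shows "\<exists>J0 \<subseteq> J. t - \<delta> \<le> sum w J0 \<and> sum w J0 \<le> t"
  using assms
proof (induction J rule: finite_induct)
  case empty
  then show ?case by auto
next
  case (insert a F)
  show ?case
  proof (cases "t \<le> sum w F")
    case True
    then obtain J0 where "J0 \<subseteq> F" "t - \<delta> \<le> sum w J0 \<and> sum w J0 \<le> t"
      using insert by auto
    then show ?thesis by blast
  next
    case False
    have "sum w (insert a F) = w a + sum w F" using insert by simp
    moreover have "w a \<le> \<delta>" using insert by simp
    ultimately have "t - \<delta> \<le> sum w F" using insert(8) by linarith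
    then show ?thesis using False by (intro exI[of _ F]) auto
  qed
qed

lemma greedy_assign:
  fixes p :: "'l \<Rightarrow> real" and w :: "'j \<Rightarrow> real"
  assumes "finite L" "L \<noteq> {}"
  shows "\<And>J. finite J \<Longrightarrow> (\<forall>j\<in>J. 0 \<le> w j \<and> w j \<le> \<delta>) \<Longrightarrow> 0 \<le> \<delta> \<Longrightarrow> (\<forall>l\<in>L. 0 \<le> p l) \<Longrightarrow>
     \<exists>g. (\<forall>j\<in>J. g j \<in> L) \<and>
       (\<Sum>l\<in>L. \<bar>(\<Sum>j\<in>{j\<in>J. g j = l}. w j) - p l\<bar>) \<le> 2 * real (card L) * \<delta> + \<bar>sum w J - sum p L\<bar>"
  using assms
proof (induction L rule: finite_ne_induct)
  case (singleton l)
  have "{j \<in> J. l = l} = J" by auto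
  then show ?case using singleton by (intro exI[of _ "\<lambda>_. l"]) auto
next
  case (insert l0 L)
  note J = insert.prems(1) and wJ = insert.prems(2) and d0 = insert.prems(3) and p0 = insert.prems(4)
  define T where "T = sum w J"
  show ?case
  proof (cases "p l0 \<le> T")
    case True
    obtain J0 where J0: "J0 \<subseteq> J" "p l0 - \<delta> \<le> sum w J0" "sum w J0 \<le> p l0"
      using subset_sum_approx[of J w \<delta> "p l0"] J wJ d0 p0 True unfolding T_def by auto
    have fJ': "finite (J - J0)" using J by simp
    obtain g' where g': "\<forall>j\<in>J - J0. g' j \<in> L"
      "(\<Sum>l\<in>L. \<bar>(\<Sum>j\<in>{j\<in>J - J0. g' j = l}. w j) - p l\<bar>) \<le> 2 * real (card L) * \<delta> + \<bar>sum w (J - J0) - sum p L\<bar>"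
      using insert.IH[OF fJ'] wJ d0 p0 by auto
    define g where "g j = (if j \<in> J0 then l0 else g' j)" for j
    have A: "{j\<in>J. g j = l} = {j\<in>J - J0. g' j = l}" if "l \<in> L" for l
      using that insert.hyps g'(1) by (auto simp: g_def)
    have B: "{j\<in>J. g j = l0} = J0"
      using insert.hyps g'(1) J0(1) by (auto simp: g_def)
    have sd: "sum w (J - J0) = T - sum w J0"
      unfolding T_def using J J0(1) by (simp add: sum_diff finite_subset)
    have "(\<Sum>l\<in>insert l0 L. \<bar>(\<Sum>j\<in>{j\<in>J. g j = l}. w j) - p l\<bar>)
        = \<bar>sum w J0 - p l0\<bar> + (\<Sum>l\<in>L. \<bar>(\<Sum>j\<in>{j\<in>J - J0. g' j = l}. w j) - p l\<bar>)"
      using insert.hyps by (simp add: A B)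
    also have "\<dots> \<le> \<delta> + (2 * real (card L) * \<delta> + \<bar>T - sum w J0 - sum p L\<bar>)"
      using g'(2) J0 sd by simp
    also have "\<dots> \<le> 2 * real (card (insert l0 L)) * \<delta> + \<bar>sum w J - sum p (insert l0 L)\<bar>"
      using insert.hyps J0 unfolding T_def by (simp add: algebra_simps abs_if)
    finally show ?thesis using g'(1) by (intro exI[of _ g]) (auto simp: g_def)
  next
    case False
    have A: "{j\<in>J. l0 = l} = {}" if "l \<in> L" for l using that insert.hyps by auto
    have "(\<Sum>l\<in>insert l0 L. \<bar>(\<Sum>j\<in>{j\<in>J. l0 = l}. w j) - p l\<bar>) = \<bar>T - p l0\<bar> + (\<Sum>l\<in>L. p l)"
      using insert.hyps p0 by (simp add: A T_def)
    also have "\<dots> \<le> 2 * real (card (insert l0 L)) * \<delta> + \<bar>sum w J - sum p (insert l0 L)\<bar>"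
      using insert.hyps False d0 sum_nonneg[of L p] p0 unfolding T_def by (simp add: abs_if)
    finally show ?thesis by (intro exI[of _ "\<lambda>_. l0"]) auto
  qed
qed

lemma msupport_ae:
  fixes \<nu> :: "'a::{second_countable_topology} measure"
  assumes S: "sets \<nu> = sets borel"
  shows "AE x in \<nu>. x \<in> msupport \<nu>"
proof -
  obtain \<B> :: "'a set set" where B: "countable \<B>" "\<And>C. C \<in> \<B> \<Longrightarrow> open C"
    "\<And>S. open S \<Longrightarrow> \<exists>U. U \<subseteq> \<B> \<and> S = \<Union>U"
    by (rule univ_second_countable) blast
  have sub: "space \<nu> - msupport \<nu> \<subseteq> (\<Union>b\<in>{b\<in>\<B>. emeasure \<nu> b = 0}. b)"
  proof
    fix x assume "x \<in> space \<nu> - msupport \<nu>"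
    then obtain U where U: "open U" "x \<in> U" "\<not> emeasure \<nu> U > 0" unfolding msupport_def by auto
    then have U0: "emeasure \<nu> U = 0" by (simp add: zero_less_iff_neq_zero)
    obtain V where V: "V \<subseteq> \<B>" "U = \<Union>V" using B(3)[OF U(1)] by blast
    then obtain b where b: "b \<in> V" "x \<in> b" using U(2) by auto
    have "b \<in> sets \<nu>" using B(2) V b S by auto
    moreover have "U \<in> sets \<nu>" using U S by auto
    moreover have "b \<subseteq> U" using V b by auto
    ultimately have "emeasure \<nu> b \<le> emeasure \<nu> U" by (simp add: emeasure_mono)
    then have "emeasure \<nu> b = 0" using U0 by simp
    then show "x \<in> (\<Union>b\<in>{b\<in>\<B>. emeasure \<nu> b = 0}. b)" using b V by auto
  qed
  have "(\<Union>b\<in>{b\<in>\<B>. emeasure \<nu> b = 0}. b) \<in> null_sets \<nu>"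
  proof (rule null_sets_UN')
    show "countable {b\<in>\<B>. emeasure \<nu> b = 0}" using B(1) by simp
    show "b \<in> null_sets \<nu>" if "b \<in> {b\<in>\<B>. emeasure \<nu> b = 0}" for b
      using that B(2) S by (auto simp: null_sets_def)
  qed
  then show ?thesis using sub by (auto intro!: AE_I' )
qed

lemma floor_eq_close: "\<lfloor>a::real\<rfloor> = \<lfloor>b\<rfloor> \<Longrightarrow> \<bar>a - b\<bar> < 1"
  using floor_correct[of a] floor_correct[of b] by linarith

lemma discretize:
  fixes \<nu> :: "'a::polish_space measure" and f :: "nat \<Rightarrow> 'a \<Rightarrow> real"
  assumes P: "prob_space \<nu>" and S: "sets \<nu> = sets borel"
    and fc: "\<And>i. i < k \<Longrightarrow> continuous_on UNIV (f i)" and fb: "\<And>i. i < k \<Longrightarrow> bounded (range (f i))"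
    and h: "0 < h"
  shows "\<exists>X p. finite X \<and> X \<subseteq> msupport \<nu> \<and> (\<forall>x\<in>X. 0 \<le> p x) \<and> sum p X = 1 \<and>
           (\<forall>i<k. \<bar>(\<Sum>x\<in>X. p x * f i x) - integral\<^sup>L \<nu> (f i)\<bar> \<le> h)"
proof -
  interpret prob_space \<nu> by fact
  have sp: "space \<nu> = UNIV" using sets_eq_imp_space_eq[OF S] by simp
  have fm: "f i \<in> borel_measurable \<nu>" if "i < k" for i
    using borel_measurable_continuous_onI[OF fc[OF that]] S by (simp cong: measurable_cong_sets)
  have "\<forall>i. \<exists>a. i < k \<longrightarrow> (\<forall>y. \<bar>f i y\<bar> \<le> a)"
  proof
    fix i show "\<exists>a. i < k \<longrightarrow> (\<forall>y. \<bar>f i y\<bar> \<le> a)"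
    proof (cases "i < k")
      case True
      then obtain a where "\<forall>x\<in>range (f i). norm x \<le> a" using fb[OF True] unfolding bounded_iff by blast
      then show ?thesis by auto
    qed auto
  qed
  then obtain a where a: "\<And>i y. i < k \<Longrightarrow> \<bar>f i y\<bar> \<le> a i" by metis
  define BB where "BB = (\<Sum>i<k. \<bar>a i\<bar>)"
  have fB: "\<bar>f i y\<bar> \<le> BB" if "i < k" for i y
  proof -
    have "\<bar>a i\<bar> \<le> BB" unfolding BB_def by (rule member_le_sum) (use that in auto)
    then show ?thesis using a[OF that, of y] by linarith
  qed
  have BB0: "0 \<le> BB" unfolding BB_def by (simp add: sum_nonneg)
  define N :: int where "N = \<lceil>BB / h\<rceil> + 1"
  define cell where "cell y = restrict (\<lambda>i. \<lfloor>f i y / h\<rfloor>) {..<k}" for y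
  have cellE: "cell y = cell y' \<longleftrightarrow> (\<forall>i<k. \<lfloor>f i y / h\<rfloor> = \<lfloor>f i y' / h\<rfloor>)" for y y'
    unfolding cell_def by (auto simp: fun_eq_iff restrict_def split: if_splits)
  have cellR: "cell y \<in> (\<Pi>\<^sub>E i\<in>{..<k}. {-N..N})" for y
  proof -
    have "\<lfloor>f i y / h\<rfloor> \<in> {-N..N}" if "i < k" for i
    proof -
      have "\<bar>f i y / h\<bar> \<le> BB / h" using fB[OF that, of y] h by (simp add: divide_right_mono)
      then have b: "- (BB / h) \<le> f i y / h" "f i y / h \<le> BB / h" by linarith+
      have c: "BB / h \<le> of_int \<lceil>BB / h\<rceil>" by (rule le_of_int_ceiling)
      have "of_int (-N) \<le> f i y / h" using b c by (simp add: N_def; linarith)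
      then have l: "-N \<le> \<lfloor>f i y / h\<rfloor>" by (simp only: le_floor_iff)
      have "f i y / h < of_int N + 1" using b c by (simp add: N_def; linarith)
      then have u: "\<lfloor>f i y / h\<rfloor> \<le> N" by (simp only: floor_le_iff)
      show ?thesis using l u by simp
    qed
    then show ?thesis unfolding cell_def by auto
  qed
  define Sup where "Sup = msupport \<nu>"
  define C where "C = cell ` Sup"
  have fC: "finite C"
    by (rule finite_subset[of _ "(\<Pi>\<^sub>E i\<in>{..<k}. {-N..N})"]) (use cellR in \<open>auto simp: C_def intro!: finite_PiE\<close>)
  define rep where "rep c = (SOME x. x \<in> Sup \<and> cell x = c)" for c
  have rep: "rep c \<in> Sup \<and> cell (rep c) = c" if "c \<in> C" for c
  proof -
    have "\<exists>x. x \<in> Sup \<and> cell x = c" using that unfolding C_def by auto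
    then show ?thesis unfolding rep_def by (rule someI_ex)
  qed
  define X where "X = rep ` C"
  have fX: "finite X" using fC by (simp add: X_def)
  have XS: "X \<subseteq> Sup" using rep by (auto simp: X_def)
  have repcell: "rep (cell x) = x" if "x \<in> X" for x
    using that rep by (auto simp: X_def)
  define A where "A x = {y. cell y = cell x}" for x
  have Am: "A x \<in> sets \<nu>" for x
  proof -
    have "A x = {y \<in> space \<nu>. \<forall>i\<in>{..<k}. i < k \<longrightarrow> \<lfloor>f i y / h\<rfloor> = \<lfloor>f i x / h\<rfloor>}"
      unfolding A_def sp cellE by auto
    also have "\<dots> \<in> sets \<nu>"
    proof (rule sets.sets_Collect_finite_All)
      fix i
      show "{y \<in> space \<nu>. i < k \<longrightarrow> \<lfloor>f i y / h\<rfloor> = \<lfloor>f i x / h\<rfloor>} \<in> sets \<nu>"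
      proof (cases "i < k")
        case True
        note [measurable] = fm[OF True]
        show ?thesis using True by measurable
      qed simp
    qed simp
    finally show ?thesis .
  qed
  have one: "(\<Sum>x\<in>X. indicator (A x) y) = (1::real)" if "y \<in> Sup" for y
  proof -
    define x0 where "x0 = rep (cell y)"
    have cy: "cell y \<in> C" using that by (simp add: C_def)
    have x0X: "x0 \<in> X" using cy by (simp add: X_def x0_def)
    have yA: "y \<in> A x0" using rep[OF cy] by (simp add: A_def x0_def)
    have "indicator (A x) y = (0::real)" if "x \<in> X - {x0}" for x
    proof -
      have "y \<notin> A x"
      proof
        assume "y \<in> A x"
        then have "cell x = cell y" by (simp add: A_def)
        then have "x = x0" using repcell that by (metis DiffD1 x0_def)
        then show False using that by simp
      qed
      then show ?thesis by simp
    qed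
    then have "(\<Sum>x\<in>X. indicator (A x) y) = indicator (A x0) y + (\<Sum>x\<in>X - {x0}. (0::real))"
      using fX x0X by (simp add: sum.remove[of X x0])
    then show ?thesis using yA by simp
  qed
  have AEone: "AE y in \<nu>. (\<Sum>x\<in>X. indicator (A x) y) = (1::real)"
    using msupport_ae[OF S] by eventually_elim (simp add: one Sup_def)
  have intb: "integrable \<nu> g" if "g \<in> borel_measurable \<nu>" "\<And>y. \<bar>g y\<bar> \<le> c" for g :: "'a \<Rightarrow> real" and c
    by (rule integrable_const_bound[where B=c]) (use that in auto)
  have intI: "integrable \<nu> (indicator (A x) :: 'a \<Rightarrow> real)" for x
    by (rule intb[of _ 1]) (use Am in \<open>auto simp: indicator_def\<close>)
  define p where "p x = measure \<nu> (A x)" for x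
  have p0: "\<forall>x\<in>X. 0 \<le> p x" by (simp add: p_def)
  have psum: "sum p X = 1"
  proof -
    have "sum p X = (\<Sum>x\<in>X. integral\<^sup>L \<nu> (indicator (A x)))" by (simp add: p_def sp)
    also have "\<dots> = integral\<^sup>L \<nu> (\<lambda>y. \<Sum>x\<in>X. indicator (A x) y)"
      using Bochner_Integration.integral_sum[where I=X and M=\<nu> and f="\<lambda>x. indicator (A x)"] intI by simp
    also have "\<dots> = integral\<^sup>L \<nu> (\<lambda>y. 1)"
      by (rule integral_cong_AE) (use AEone Am in auto)
    also have "\<dots> = 1" by (simp add: prob_space)
    finally show ?thesis .
  qed
  have approx: "\<bar>(\<Sum>x\<in>X. p x * f i x) - integral\<^sup>L \<nu> (f i)\<bar> \<le> h" if ik: "i < k" for i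
  proof -
    note [measurable] = fm[OF ik]
    have intfA: "integrable \<nu> (\<lambda>y. f i y * indicator (A x) y)" for x
      by (rule intb[of _ BB]) (use fB[OF ik] Am BB0 in \<open>auto simp: indicator_def\<close>)
    have "integral\<^sup>L \<nu> (f i) = integral\<^sup>L \<nu> (\<lambda>y. \<Sum>x\<in>X. f i y * indicator (A x) y)"
    proof (rule integral_cong_AE)
      show "AE y in \<nu>. f i y = (\<Sum>x\<in>X. f i y * indicator (A x) y)"
        using AEone by eventually_elim (simp add: sum_distrib_left[symmetric])
    qed (use Am in auto)
    also have "\<dots> = (\<Sum>x\<in>X. integral\<^sup>L \<nu> (\<lambda>y. f i y * indicator (A x) y))"
      using Bochner_Integration.integral_sum[where I=X and M=\<nu> and f="\<lambda>x y. f i y * indicator (A x) y"] intfA by simp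
    finally have eq: "integral\<^sup>L \<nu> (f i) = (\<Sum>x\<in>X. integral\<^sup>L \<nu> (\<lambda>y. f i y * indicator (A x) y))" .
    have each: "\<bar>p x * f i x - integral\<^sup>L \<nu> (\<lambda>y. f i y * indicator (A x) y)\<bar> \<le> h * p x" for x
    proof -
      have "p x * f i x = integral\<^sup>L \<nu> (\<lambda>y. f i x * indicator (A x) y)"
        by (simp add: p_def sp)
      then have "p x * f i x - integral\<^sup>L \<nu> (\<lambda>y. f i y * indicator (A x) y)
          = integral\<^sup>L \<nu> (\<lambda>y. (f i x - f i y) * indicator (A x) y)"
        using intfA[of x] intI[of x] by (simp add: left_diff_distrib)
      also have "\<bar>\<dots>\<bar> \<le> integral\<^sup>L \<nu> (\<lambda>y. \<bar>(f i x - f i y) * indicator (A x) y\<bar>)"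
        using integral_norm_bound[of \<nu> "\<lambda>y. (f i x - f i y) * indicator (A x) y"] by simp
      also have "\<dots> \<le> integral\<^sup>L \<nu> (\<lambda>y. h * indicator (A x) y)"
      proof (rule integral_mono)
        have fxy: "\<bar>f i x - f i y\<bar> \<le> 2 * BB" for y using fB[OF ik, of x] fB[OF ik, of y] by arith
        show "integrable \<nu> (\<lambda>y. \<bar>(f i x - f i y) * indicator (A x) y\<bar>)"
          by (rule intb[of _ "2*BB"]) (use Am BB0 fxy in \<open>auto simp: indicator_def abs_mult\<close>)
        show "integrable \<nu> (\<lambda>y. h * indicator (A x) y)" using intI[of x] by simp
        fix y
        show "\<bar>(f i x - f i y) * indicator (A x) y\<bar> \<le> h * indicator (A x) y"
        proof (cases "y \<in> A x")
          case True
          then have "\<lfloor>f i x / h\<rfloor> = \<lfloor>f i y / h\<rfloor>" using ik by (simp add: A_def cellE)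
          then have "\<bar>f i x / h - f i y / h\<bar> < 1" by (rule floor_eq_close)
          then have "\<bar>(f i x - f i y) / h\<bar> < 1" by (simp add: diff_divide_distrib)
          then have "\<bar>f i x - f i y\<bar> < h" using h by (simp add: abs_div)
          then show ?thesis using True by simp
        qed simp
      qed
      also have "\<dots> = h * p x" by (simp add: p_def sp)
      finally show ?thesis .
    qed
    have "\<bar>(\<Sum>x\<in>X. p x * f i x) - integral\<^sup>L \<nu> (f i)\<bar>
        = \<bar>\<Sum>x\<in>X. (p x * f i x - integral\<^sup>L \<nu> (\<lambda>y. f i y * indicator (A x) y))\<bar>"
      by (simp add: eq sum_subtractf)
    also have "\<dots> \<le> (\<Sum>x\<in>X. \<bar>p x * f i x - integral\<^sup>L \<nu> (\<lambda>y. f i y * indicator (A x) y)\<bar>)"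
      by (rule sum_abs)
    also have "\<dots> \<le> (\<Sum>x\<in>X. h * p x)" by (rule sum_mono) (rule each)
    also have "\<dots> = h" using psum by (simp add: sum_distrib_left[symmetric])
    finally show ?thesis .
  qed
  show ?thesis
    using fX XS p0 psum approx unfolding Sup_def by blast
qed

lemma vvec_measurable:
  assumes "\<And>i. v i \<in> borel_measurable M"
  shows "(\<lambda>\<omega> i. v (\<pi> i) \<omega>) \<in> measurable M (PiM UNIV (\<lambda>_. borel))"
  by (rule measurable_PiM_single') (use assms in auto)

lemma exch_emeasure:
  assumes ex: "exchangeable M v" and pi: "\<pi> permutes {..<n}" and B: "B \<in> sets (PiM UNIV (\<lambda>_. borel))"
  shows "emeasure M ((\<lambda>\<omega> i. v (\<pi> i) \<omega>) -` B \<inter> space M) = emeasure M ((\<lambda>\<omega> i. v i \<omega>) -` B \<inter> space M)"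
proof -
  have vm: "\<And>i. v i \<in> borel_measurable M" using ex by (simp add: exchangeable_def)
  have eq: "distr M (PiM UNIV (\<lambda>_. borel)) (\<lambda>\<omega> i. v (\<pi> i) \<omega>) = distr M (PiM UNIV (\<lambda>_. borel)) (\<lambda>\<omega> i. v i \<omega>)"
    using ex pi by (auto simp: exchangeable_def)
  have "emeasure M ((\<lambda>\<omega> i. v (\<pi> i) \<omega>) -` B \<inter> space M) = emeasure (distr M (PiM UNIV (\<lambda>_. borel)) (\<lambda>\<omega> i. v (\<pi> i) \<omega>)) B"
    by (rule emeasure_distr[symmetric, OF vvec_measurable[OF vm] B])
  also have "\<dots> = emeasure (distr M (PiM UNIV (\<lambda>_. borel)) (\<lambda>\<omega> i. v (id i) \<omega>)) B" using eq by simp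
  also have "\<dots> = emeasure M ((\<lambda>\<omega> i. v (id i) \<omega>) -` B \<inter> space M)"
    by (rule emeasure_distr[OF vvec_measurable[OF vm] B])
  finally show ?thesis by simp
qed

lemma exch_integral:
  fixes h :: "(nat \<Rightarrow> real) \<Rightarrow> real"
  assumes ex: "exchangeable M v" and pi: "\<pi> permutes {..<n}" and h: "h \<in> borel_measurable (PiM UNIV (\<lambda>_. borel))"
  shows "integral\<^sup>L M (\<lambda>\<omega>. h (\<lambda>i. v (\<pi> i) \<omega>)) = integral\<^sup>L M (\<lambda>\<omega>. h (\<lambda>i. v i \<omega>))"
proof -
  have vm: "\<And>i. v i \<in> borel_measurable M" using ex by (simp add: exchangeable_def)
  have eq: "distr M (PiM UNIV (\<lambda>_. borel)) (\<lambda>\<omega> i. v (\<pi> i) \<omega>) = distr M (PiM UNIV (\<lambda>_. borel)) (\<lambda>\<omega> i. v i \<omega>)"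
    using ex pi by (auto simp: exchangeable_def)
  have "integral\<^sup>L M (\<lambda>\<omega>. h (\<lambda>i. v (\<pi> i) \<omega>)) = integral\<^sup>L (distr M (PiM UNIV (\<lambda>_. borel)) (\<lambda>\<omega> i. v (\<pi> i) \<omega>)) h"
    by (rule integral_distr[symmetric, OF vvec_measurable[OF vm] h])
  also have "\<dots> = integral\<^sup>L (distr M (PiM UNIV (\<lambda>_. borel)) (\<lambda>\<omega> i. v (id i) \<omega>)) h" using eq by simp
  also have "\<dots> = integral\<^sup>L M (\<lambda>\<omega>. h (\<lambda>i. v (id i) \<omega>))"
    by (rule integral_distr[OF vvec_measurable[OF vm] h])
  finally show ?thesis by simp
qed

lemma lim_eventually_eq:
  assumes "\<And>n. n \<ge> N \<Longrightarrow> X n = Y n"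
  shows "lim X = lim Y"
proof -
  have "(X \<longlonglongrightarrow> l) = (Y \<longlonglongrightarrow> l)" for l
    by (rule tendsto_cong) (use assms in \<open>auto simp: eventually_sequentially\<close>)
  then show ?thesis unfolding lim_def by simp
qed

lemma sum_le_minus_ln_prod:
  fixes x :: "nat \<Rightarrow> real"
  assumes "\<And>i. 0 \<le> x i" "\<And>i. x i \<le> 1" "(\<Prod>i<n. 1 - x i) > 0"
  shows "(\<Sum>i<n. x i) \<le> - ln (\<Prod>i<n. 1 - x i)"
proof -
  have pnz: "(\<Prod>i<n. 1 - x i) \<noteq> 0" by (metis assms(3) less_irrefl)
  have nz: "1 - x i \<noteq> 0" if "i < n" for i
  proof
    assume "1 - x i = 0"
    then have "(\<Prod>i<n. 1 - x i) = 0" using that by (intro prod_zero) auto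
    then show False using pnz by simp
  qed
  have pos: "0 < 1 - x i" if "i < n" for i using assms(2)[of i] nz[OF that] by linarith
  have "ln (\<Prod>i<n. 1 - x i) = (\<Sum>i<n. ln (1 - x i))" by (rule ln_prod) (use nz in simp_all)
  also have "\<dots> \<le> (\<Sum>i<n. - x i)"
  proof (rule sum_mono)
    fix i assume "i \<in> {..<n}"
    then show "ln (1 - x i) \<le> - x i" using ln_le_minus_one[OF pos[of i]] by simp
  qed
  finally show ?thesis by (simp add: sum_negf)
qed

lemma prob_proper:
  assumes M: "prob_space M" and ex: "exchangeable M v"
    and v01: "\<And>i \<omega>. \<omega> \<in> space M \<Longrightarrow> v i \<omega> \<in> {0..1}"
    and pos: "AE \<omega> in M. v 0 \<omega> > 0"
  shows "AE \<omega> in M. (\<lambda>n. \<Prod>i<n. 1 - v i \<omega>) \<longlonglongrightarrow> 0"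
proof -
  interpret prob_space M by fact
  have vm[measurable]: "\<And>i. v i \<in> borel_measurable M" using ex by (simp add: exchangeable_def)
  define P where "P x n = (\<Prod>i<n. 1 - x i)" for x :: "nat \<Rightarrow> real" and n
  define L where "L x = lim (P x)" for x
  have Pfun: "P x = (\<lambda>n. \<Prod>i<n. 1 - x i)" for x by (rule ext) (simp add: P_def)
  have Pnn: "0 \<le> P x n" if "\<And>i. x i \<in> {0..1}" for x n
    unfolding P_def using that by (auto intro!: prod_nonneg)
  have Pconv: "P x \<longlonglongrightarrow> L x \<and> (\<forall>n. L x \<le> P x n) \<and> 0 \<le> L x" if x01: "\<And>i. x i \<in> {0..1}" for x
  proof -
    have "decseq (P x)"
    proof (rule decseq_SucI)
      fix n
      have "P x (Suc n) = P x n * (1 - x n)" by (simp add: P_def)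
      also have "\<dots> \<le> P x n * 1" by (rule mult_left_mono) (use x01[of n] Pnn[of x, OF x01] in auto)
      finally show "P x (Suc n) \<le> P x n" by simp
    qed
    then obtain l where l: "P x \<longlonglongrightarrow> l" "\<forall>n. l \<le> P x n"
      using decseq_convergent[of "P x" 0] Pnn[of x, OF x01] by blast
    have "L x = l" unfolding L_def using l(1) by (rule limI)
    moreover have "0 \<le> l" using l(1) Pnn[of x, OF x01] by (intro LIMSEQ_le_const) auto
    ultimately show ?thesis using l by simp
  qed
  have Lm[measurable]: "L \<in> borel_measurable (PiM UNIV (\<lambda>_. borel))"
    unfolding L_def P_def
  proof (rule borel_measurable_lim_metric)
    fix n
    have "(\<lambda>x::nat\<Rightarrow>real. x i) \<in> borel_measurable (PiM UNIV (\<lambda>_. borel))" for i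
      by (rule measurable_component_singleton) simp
    then show "(\<lambda>x::nat\<Rightarrow>real. \<Prod>i<n. 1 - x i) \<in> borel_measurable (PiM UNIV (\<lambda>_. borel))"
      by (intro borel_measurable_prod borel_measurable_diff borel_measurable_const) auto
  qed
  have Lperm: "L (\<lambda>i. x (\<pi> i)) = L x" if "\<pi> permutes {..<N}" for x \<pi> N
    unfolding L_def
  proof (rule lim_eventually_eq)
    fix n assume "n \<ge> N"
    then have "\<pi> permutes {..<n}" using that by (auto intro: permutes_subset)
    then show "P (\<lambda>i. x (\<pi> i)) n = P x n" unfolding P_def
      by (subst prod.permute[of \<pi>]) (auto simp: comp_def)
  qed
  have key: "AE \<omega> in M. \<not> L (\<lambda>i. v i \<omega>) > c" if c: "0 < c" "c \<le> 1" for c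
  proof -
    define H where "H \<omega> = (if L (\<lambda>i. v i \<omega>) > c then 1 else 0 :: real)" for \<omega>
    have Hm[measurable]: "H \<in> borel_measurable M"
    proof -
      have Lvm[measurable]: "(\<lambda>\<omega>. L (\<lambda>i. v i \<omega>)) \<in> borel_measurable M"
        using measurable_comp[OF vvec_measurable[OF vm, of id] Lm] by (simp add: comp_def)
      then show ?thesis unfolding H_def by measurable
    qed
    have int: "integrable M (\<lambda>\<omega>. v k \<omega> * H \<omega>)" for k
    proof (rule integrable_const_bound[where B=1])
      show "(\<lambda>\<omega>. v k \<omega> * H \<omega>) \<in> borel_measurable M" by measurable
      show "AE \<omega> in M. norm (v k \<omega> * H \<omega>) \<le> 1" using v01 by (auto simp: H_def abs_mult)
    qed
    define E where "E k = integral\<^sup>L M (\<lambda>\<omega>. v k \<omega> * H \<omega>)" for k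
    have Ek: "E k = E 0" for k
    proof -
      define h where "h x = x 0 * (if L x > c then 1 else 0 :: real)" for x :: "nat \<Rightarrow> real"
      have c0[measurable]: "(\<lambda>x::nat\<Rightarrow>real. x 0) \<in> borel_measurable (PiM UNIV (\<lambda>_. borel))"
        by (rule measurable_component_singleton) simp
      have hm: "h \<in> borel_measurable (PiM UNIV (\<lambda>_. borel))" unfolding h_def by measurable
      have pk: "Transposition.transpose 0 k permutes {..<Suc k}" by (rule permutes_swap_id) auto
      have Lv: "L (\<lambda>i. v (Transposition.transpose 0 k i) \<omega>) = L (\<lambda>i. v i \<omega>)" for \<omega>
        using Lperm[OF pk, of "\<lambda>i. v i \<omega>"] by simp
      have "E k = integral\<^sup>L M (\<lambda>\<omega>. h (\<lambda>i. v (Transposition.transpose 0 k i) \<omega>))"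
        unfolding E_def h_def H_def Lv by simp
      also have "\<dots> = integral\<^sup>L M (\<lambda>\<omega>. h (\<lambda>i. v i \<omega>))" by (rule exch_integral[OF ex pk hm])
      also have "\<dots> = E 0" unfolding E_def h_def H_def by simp
      finally show ?thesis .
    qed
    have E0: "0 \<le> E 0" unfolding E_def by (rule Bochner_Integration.integral_nonneg) (use v01 in \<open>auto simp: H_def\<close>)
    have bound: "real n * E 0 \<le> - ln c" for n
    proof -
      have "(\<Sum>k<n. E k) = (\<Sum>k<n. E 0)" by (intro sum.cong refl Ek)
      then have "real n * E 0 = (\<Sum>k<n. E k)" by simp
      also have "\<dots> = integral\<^sup>L M (\<lambda>\<omega>. \<Sum>k<n. v k \<omega> * H \<omega>)"
        unfolding E_def by (rule Bochner_Integration.integral_sum[symmetric]) (rule int)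
      also have "\<dots> \<le> integral\<^sup>L M (\<lambda>\<omega>. - ln c)"
      proof (rule integral_mono)
        show "integrable M (\<lambda>\<omega>. \<Sum>k<n. v k \<omega> * H \<omega>)" using int by auto
        show "integrable M (\<lambda>\<omega>. - ln c)" by simp
        fix \<omega> assume \<omega>: "\<omega> \<in> space M"
        show "(\<Sum>k<n. v k \<omega> * H \<omega>) \<le> - ln c"
        proof (cases "L (\<lambda>i. v i \<omega>) > c")
          case True
          have x01: "\<And>i. v i \<omega> \<in> {0..1}" using v01 \<omega> by auto
          have "c < P (\<lambda>i. v i \<omega>) n" using Pconv[of "\<lambda>i. v i \<omega>", OF x01] True by (meson less_le_trans)
          then have Pp: "(\<Prod>i<n. 1 - v i \<omega>) > 0" "c < (\<Prod>i<n. 1 - v i \<omega>)" using c by (auto simp: P_def)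
          have "(\<Sum>k<n. v k \<omega>) \<le> - ln (\<Prod>i<n. 1 - v i \<omega>)"
            by (rule sum_le_minus_ln_prod) (use x01 Pp in auto)
          also have "\<dots> \<le> - ln c" using Pp c by simp
          finally show ?thesis using True by (simp add: H_def)
        next
          case False
          then show ?thesis using c by (simp add: H_def)
        qed
      qed
      also have "\<dots> = - ln c" by (simp add: prob_space)
      finally show ?thesis .
    qed
    have "E 0 = 0"
    proof (rule ccontr)
      assume "E 0 \<noteq> 0"
      then have "E 0 > 0" using E0 by simp
      obtain n :: nat where "- ln c / E 0 < real n" using reals_Archimedean2 by blast
      then have "- ln c < real n * E 0" using \<open>E 0 > 0\<close> by (metis pos_divide_less_eq)
      then show False using bound[of n] by simp
    qed
    then have "AE \<omega> in M. v 0 \<omega> * H \<omega> = 0"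
      unfolding E_def using integral_nonneg_eq_0_iff_AE[OF int[of 0]] v01 by (auto simp: H_def)
    then show ?thesis using pos by eventually_elim (auto simp: H_def split: if_splits)
  qed
  have "AE \<omega> in M. \<forall>m::nat. \<not> L (\<lambda>i. v i \<omega>) > 1 / (real m + 1)"
    unfolding AE_all_countable by (intro allI key) auto
  then show ?thesis
  proof (rule AE_mp[OF _ AE_I2[OF impI]])
    fix \<omega> assume \<omega>: "\<omega> \<in> space M" and A: "\<forall>m::nat. \<not> L (\<lambda>i. v i \<omega>) > 1 / (real m + 1)"
    have x01: "\<And>i. v i \<omega> \<in> {0..1}" using v01 \<omega> by auto
    have "L (\<lambda>i. v i \<omega>) \<le> 0"
    proof (rule ccontr)
      assume "\<not> L (\<lambda>i. v i \<omega>) \<le> 0"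
      then obtain m where "m > 0" "inverse (real m) < L (\<lambda>i. v i \<omega>)"
        using ex_inverse_of_nat_less[of "L (\<lambda>i. v i \<omega>)"] by auto
      moreover have "1 / (real (m - 1) + 1) = inverse (real m)" using \<open>m > 0\<close> by (simp add: of_nat_diff inverse_eq_divide)
      moreover have "\<not> L (\<lambda>i. v i \<omega>) > 1 / (real (m - 1) + 1)" using A by blast
      ultimately show False by simp
    qed
    then have "L (\<lambda>i. v i \<omega>) = 0" using Pconv[of "\<lambda>i. v i \<omega>", OF x01] by simp
    then show "(\<lambda>n. \<Prod>i<n. 1 - v i \<omega>) \<longlonglongrightarrow> 0" using Pconv[of "\<lambda>i. v i \<omega>", OF x01] by (simp add: Pfun)
  qed
qed

lemma Beta_pos_real: "0 < a \<Longrightarrow> 0 < b \<Longrightarrow> 0 < Beta a b" for a b :: real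
  by (simp add: Beta_def)

lemma beta_density_pos: "0 < a \<Longrightarrow> 0 < b \<Longrightarrow> 0 < x \<Longrightarrow> x < 1 \<Longrightarrow> 0 < beta_density a b x"
  by (simp add: beta_density_def Beta_pos_real)

lemma beta_density_zero: "x \<le> 0 \<Longrightarrow> beta_density a b x = 0"
  by (simp add: beta_density_def)

lemma beta_AE_pos:
  assumes d: "distributed M lborel X (\<lambda>x. ennreal (beta_density a b x))"
  shows "AE \<omega> in M. X \<omega> > 0"
proof -
  have Xm: "X \<in> measurable M lborel" using d by (rule distributed_measurable)
  have "emeasure M (X -` {..0} \<inter> space M) = (\<integral>\<^sup>+x. ennreal (beta_density a b x) * indicator {..0} x \<partial>lborel)"
    by (rule distributed_emeasure[OF d]) simp
  also have "\<dots> = (\<integral>\<^sup>+x. (0::ennreal) \<partial>(lborel::real measure))"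
  proof -
    have "(\<lambda>x. ennreal (beta_density a b x) * indicator {..0::real} x) = (\<lambda>x. 0)"
      by (auto simp: fun_eq_iff beta_density_zero indicator_def)
    then show ?thesis by (simp only:)
  qed
  finally have "X -` {..0} \<inter> space M \<in> null_sets M"
    using measurable_sets[OF Xm, of "{..0}"] by (simp add: null_sets_def)
  then show ?thesis by (rule AE_I') auto
qed

lemma beta_interval_pos:
  assumes d: "distributed M lborel X (\<lambda>x. ennreal (beta_density a b x))"
    and ab: "0 < a" "0 < b" and eta: "0 < \<eta>" "\<eta> < \<delta>" "\<delta> < 1"
  shows "emeasure M (X -` {\<eta>..\<delta>} \<inter> space M) > 0"
proof -
  have fm: "(\<lambda>x. ennreal (beta_density a b x)) \<in> borel_measurable lborel"
    using d by (rule distributed_borel_measurable)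
  have e: "emeasure M (X -` {\<eta>..\<delta>} \<inter> space M) = (\<integral>\<^sup>+x. ennreal (beta_density a b x) * indicator {\<eta>..\<delta>} x \<partial>lborel)"
    by (rule distributed_emeasure[OF d]) simp
  show ?thesis
  proof (rule ccontr)
    assume "\<not> ?thesis"
    then have "(\<integral>\<^sup>+x. ennreal (beta_density a b x) * indicator {\<eta>..\<delta>} x \<partial>lborel) = 0"
      using e by (simp add: zero_less_iff_neq_zero)
    then have "AE x in lborel. ennreal (beta_density a b x) * indicator {\<eta>..\<delta>} x = 0"
      using nn_integral_0_iff_AE[of "\<lambda>x. ennreal (beta_density a b x) * indicator {\<eta>..\<delta>} x" lborel] fm
      by simp
    then have "AE x in lborel. x \<notin> {\<eta>..\<delta>}"
    proof (rule AE_mp[OF _ AE_I2[OF impI]])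
      fix x assume "ennreal (beta_density a b x) * indicator {\<eta>..\<delta>} x = 0"
      moreover have "x \<in> {\<eta>..\<delta>} \<Longrightarrow> 0 < beta_density a b x"
        using ab eta by (intro beta_density_pos) auto
      ultimately show "x \<notin> {\<eta>..\<delta>}" by (auto simp: indicator_def)
    qed
    then have "{\<eta>..\<delta>} \<in> null_sets lborel" by (subst AE_iff_null_sets) auto
    then show False using eta by (simp add: null_sets_def)
  qed
qed

lemma perm_onto:
  assumes J: "J \<subseteq> {..<n}" "card J = N"
  shows "\<exists>\<pi>. \<pi> permutes {..<n} \<and> \<pi> ` {..<N} = J"
proof -
  have fJ: "finite J" using J finite_subset by blast
  have Nn: "N \<le> n" using card_mono[OF _ J(1)] J(2) by simp
  obtain f where f: "bij_betw f {..<N} J"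
    using ex_bij_betw_nat_finite[OF fJ] J(2) by (auto simp: atLeast0LessThan)
  have "card ({..<n} - {..<N}) = card ({..<n} - J)"
    using J Nn fJ by (simp add: card_Diff_subset)
  then obtain g where g: "bij_betw g ({..<n} - {..<N}) ({..<n} - J)"
    using finite_same_card_bij[of "{..<n} - {..<N}" "{..<n} - J"] by auto
  define \<pi> where "\<pi> x = (if x < N then f x else if x < n then g x else x)" for x
  have b1: "bij_betw \<pi> {..<N} J"
    using f by (rule bij_betw_cong[THEN iffD1, rotated]) (auto simp: \<pi>_def)
  have b2: "bij_betw \<pi> ({..<n} - {..<N}) ({..<n} - J)"
    using g by (rule bij_betw_cong[THEN iffD1, rotated]) (auto simp: \<pi>_def)
  have "bij_betw \<pi> ({..<N} \<union> ({..<n} - {..<N})) (J \<union> ({..<n} - J))"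
    by (rule bij_betw_combine[OF b1 b2]) auto
  moreover have "{..<N} \<union> ({..<n} - {..<N}) = {..<n}" using Nn by auto
  moreover have "J \<union> ({..<n} - J) = {..<n}" using J by auto
  ultimately have "bij_betw \<pi> {..<n} {..<n}" by simp
  then have "\<pi> permutes {..<n}"
    by (rule bij_imp_permutes) (use Nn in \<open>auto simp: \<pi>_def\<close>)
  moreover have "\<pi> ` {..<N} = J" using b1 by (simp add: bij_betw_def)
  ultimately show ?thesis by blast
qed

lemma card_filter_sum: "finite A \<Longrightarrow> (\<Sum>j\<in>A. if P j then 1 else 0 :: real) = real (card {j\<in>A. P j})"
  by (simp add: sum.If_cases Int_def)

lemma joint_pos:
  assumes M: "prob_space M" and ex: "exchangeable M v" and Ib: "I \<in> sets borel"
    and e: "\<And>j. emeasure M (v j -` I \<inter> space M) = e" and e0: "e > 0"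
  shows "emeasure M {\<omega> \<in> space M. \<forall>j<N. v j \<omega> \<in> I} > 0"
proof (rule ccontr)
  interpret prob_space M by fact
  have vm[measurable]: "\<And>i. v i \<in> borel_measurable M" using ex by (simp add: exchangeable_def)
  define E where "E j = v j -` I \<inter> space M" for j
  have Em: "E j \<in> sets M" for j unfolding E_def by (rule measurable_sets[OF vm Ib])
  have Em2: "{\<omega> \<in> space M. v j \<omega> \<in> I} \<in> sets M" for j
    using Em[of j] by (simp add: E_def vimage_def Int_def conj_commute)
  define q where "q = measure M (E 0)"
  have mq: "measure M (E j) = q" for j
    unfolding q_def measure_def using e by (simp add: E_def)
  have q0: "q > 0"
  proof -
    have "emeasure M (E 0) = ennreal q" unfolding q_def by (simp add: emeasure_eq_measure)
    then show ?thesis using e[of 0] e0 unfolding E_def by simp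
  qed
  assume "\<not> ?thesis"
  then have z: "emeasure M {\<omega> \<in> space M. \<forall>j<N. v j \<omega> \<in> I} = 0" by (simp add: zero_less_iff_neq_zero)
  define B where "B = {x::nat\<Rightarrow>real. \<forall>i<N. x i \<in> I}"
  have Bm: "B \<in> sets (PiM UNIV (\<lambda>_. borel))"
  proof -
    have "B = {x \<in> space (PiM UNIV (\<lambda>_. borel)). \<forall>i\<in>{..<N}. x i \<in> I}"
      by (auto simp: B_def space_PiM)
    also have "\<dots> \<in> sets (PiM UNIV (\<lambda>_. borel))"
    proof (rule sets.sets_Collect_finite_All)
      fix i :: nat
      have "(\<lambda>x::nat\<Rightarrow>real. x i) \<in> measurable (PiM UNIV (\<lambda>_. borel)) borel"
        by (rule measurable_component_singleton) simp
      from measurable_sets[OF this Ib]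
      show "{x \<in> space (PiM UNIV (\<lambda>_. borel)). x i \<in> I} \<in> sets (PiM UNIV (\<lambda>_. borel))"
        by (simp add: vimage_def Int_def conj_commute)
    qed simp
    finally show ?thesis .
  qed
  have zJ: "emeasure M {\<omega> \<in> space M. \<forall>j\<in>J. v j \<omega> \<in> I} = 0" if J: "J \<subseteq> {..<n}" "card J = N" for J n
  proof -
    obtain \<pi> where \<pi>: "\<pi> permutes {..<n}" "\<pi> ` {..<N} = J" using perm_onto[OF J] by blast
    have "{\<omega> \<in> space M. \<forall>j\<in>J. v j \<omega> \<in> I} = (\<lambda>\<omega> i. v (\<pi> i) \<omega>) -` B \<inter> space M"
      using \<pi>(2) by (auto simp: B_def)
    also have "emeasure M \<dots> = emeasure M ((\<lambda>\<omega> i. v i \<omega>) -` B \<inter> space M)"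
      by (rule exch_emeasure[OF ex \<pi>(1) Bm])
    also have "(\<lambda>\<omega> i. v i \<omega>) -` B \<inter> space M = {\<omega> \<in> space M. \<forall>j<N. v j \<omega> \<in> I}"
      by (auto simp: B_def)
    finally show ?thesis using z by simp
  qed
  obtain n :: nat where n: "real N / q < real n" using reals_Archimedean2 by blast
  then have nq: "real N < real n * q" using q0 by (simp add: pos_divide_less_eq)
  define \<J> where "\<J> = {J. J \<subseteq> {..<n} \<and> card J = N}"
  have Z: "(\<Union>J\<in>\<J>. {\<omega> \<in> space M. \<forall>j\<in>J. v j \<omega> \<in> I}) \<in> null_sets M"
  proof (rule null_sets_UN')
    have "\<J> \<subseteq> Pow {..<n}" by (auto simp: \<J>_def)
    then show "countable \<J>" by (rule countable_subset) (simp add: countable_finite)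
    fix J assume "J \<in> \<J>"
    then have "emeasure M {\<omega> \<in> space M. \<forall>j\<in>J. v j \<omega> \<in> I} = 0" using zJ by (auto simp: \<J>_def)
    moreover have "{\<omega> \<in> space M. \<forall>j\<in>J. v j \<omega> \<in> I} \<in> sets M"
    proof -
      have "finite J" using \<open>J \<in> \<J>\<close> finite_subset by (auto simp: \<J>_def)
      then show ?thesis
        by (intro sets.sets_Collect_finite_All Em2)
    qed
    ultimately show "{\<omega> \<in> space M. \<forall>j\<in>J. v j \<omega> \<in> I} \<in> null_sets M" by (simp add: null_sets_def)
  qed
  have AEle: "AE \<omega> in M. (\<Sum>j<n. indicator (E j) \<omega>) \<le> (real N :: real)"
    using AE_not_in[OF Z]
  proof (rule AE_mp[OF _ AE_I2[OF impI]])
    fix \<omega> assume \<omega>: "\<omega> \<in> space M" and nz: "\<omega> \<notin> (\<Union>J\<in>\<J>. {\<omega> \<in> space M. \<forall>j\<in>J. v j \<omega> \<in> I})"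
    define K where "K = {j\<in>{..<n}. v j \<omega> \<in> I}"
    have "card K < N"
    proof (rule ccontr)
      assume "\<not> card K < N"
      then obtain T where T: "T \<subseteq> K" "card T = N" by (metis not_less obtain_subset_with_card_n)
      then have "T \<in> \<J>" by (auto simp: \<J>_def K_def)
      moreover have "\<forall>j\<in>T. v j \<omega> \<in> I" using T by (auto simp: K_def)
      ultimately show False using nz \<omega> by blast
    qed
    have "(\<Sum>j<n. indicator (E j) \<omega>) = (\<Sum>j<n. if v j \<omega> \<in> I then 1 else 0 :: real)"
      using \<omega> by (intro sum.cong) (auto simp: E_def indicator_def)
    also have "\<dots> = real (card K)" unfolding K_def by (rule card_filter_sum) simp
    finally show "(\<Sum>j<n. indicator (E j) \<omega>) \<le> (real N :: real)" using \<open>card K < N\<close> by simp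
  qed
  have "real n * q = (\<Sum>j<n. measure M (E j))" by (simp add: mq)
  also have "\<dots> = integral\<^sup>L M (\<lambda>\<omega>. \<Sum>j<n. indicator (E j) \<omega>)"
    using Bochner_Integration.integral_sum[where I="{..<n}" and M=M and f="\<lambda>j. indicator (E j) :: _ \<Rightarrow> real"] Em
    by (simp add: emeasure_eq_measure)
  also have "\<dots> \<le> integral\<^sup>L M (\<lambda>\<omega>. real N)"
  proof (rule integral_mono_AE)
    show "integrable M (\<lambda>\<omega>. \<Sum>j<n. indicator (E j) \<omega> :: real)" using Em by (auto simp: emeasure_eq_measure)
    show "integrable M (\<lambda>\<omega>. real N)" by simp
  qed (rule AEle)
  also have "\<dots> = real N" by (simp add: prob_space)
  finally show False using nq by simp
qed

lemma bound_family:
  fixes f :: "nat \<Rightarrow> 'a \<Rightarrow> real"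
  assumes fb: "\<And>i. i < k \<Longrightarrow> bounded (range (f i))"
  shows "\<exists>B. 0 \<le> B \<and> (\<forall>i<k. \<forall>y. \<bar>f i y\<bar> \<le> B)"
proof -
  have "\<forall>i. \<exists>a. i < k \<longrightarrow> (\<forall>y. \<bar>f i y\<bar> \<le> a)"
  proof
    fix i show "\<exists>a. i < k \<longrightarrow> (\<forall>y. \<bar>f i y\<bar> \<le> a)"
    proof (cases "i < k")
      case True
      then obtain a where "\<forall>x\<in>range (f i). norm x \<le> a" using fb[OF True] unfolding bounded_iff by blast
      then show ?thesis by auto
    qed auto
  qed
  then obtain a where a: "\<And>i y. i < k \<Longrightarrow> \<bar>f i y\<bar> \<le> a i" by metis
  define BB where "BB = (\<Sum>i<k. \<bar>a i\<bar>)"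
  have "\<bar>f i y\<bar> \<le> BB" if "i < k" for i y
  proof -
    have "\<bar>a i\<bar> \<le> BB" unfolding BB_def by (rule member_le_sum) (use that in auto)
    then show ?thesis using a[OF that, of y] by linarith
  qed
  moreover have "0 \<le> BB" unfolding BB_def by (simp add: sum_nonneg)
  ultimately show ?thesis by blast
qed

lemma regroup:
  fixes w :: "'j \<Rightarrow> real" and F :: "'x \<Rightarrow> real"
  assumes "finite J" "finite X" "\<forall>j\<in>J. g j \<in> X"
  shows "(\<Sum>j\<in>J. w j * F (g j)) = (\<Sum>x\<in>X. (\<Sum>j\<in>{j\<in>J. g j = x}. w j) * F x)"
proof -
  have "(\<Sum>x\<in>X. (\<Sum>j\<in>{j\<in>J. g j = x}. w j) * F x) = (\<Sum>x\<in>X. \<Sum>j\<in>{j\<in>J. g j = x}. w j * F x)"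
    by (rule sum.cong[OF refl]) (rule sum_distrib_right)
  also have "\<dots> = (\<Sum>x\<in>X. \<Sum>j\<in>{j\<in>J. g j = x}. w j * F (g j))"
    by (intro sum.cong refl) auto
  also have "\<dots> = (\<Sum>j\<in>J. w j * F (g j))"
    by (rule sum.group) (use assms in auto)
  finally show ?thesis by simp
qed

lemma weights_basic:
  assumes v01: "\<And>i. v i \<omega> \<in> {0..1}"
  shows "\<And>j. 0 \<le> sb_weight v j \<omega>" "\<And>j. sb_weight v j \<omega> \<le> v j \<omega>"
    "\<And>n. (\<Sum>j<n. sb_weight v j \<omega>) = 1 - (\<Prod>i<n. 1 - v i \<omega>)"
    "\<And>n. 0 \<le> (\<Prod>i<n. 1 - v i \<omega>)" "\<And>n. (\<Prod>i<n. 1 - v i \<omega>) \<le> 1"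
    "summable (\<lambda>j. sb_weight v j \<omega>)" "(\<Sum>j. sb_weight v j \<omega>) \<le> 1"
proof -
  show P0: "0 \<le> (\<Prod>i<n. 1 - v i \<omega>)" for n using v01 by (auto intro!: prod_nonneg)
  show P1: "(\<Prod>i<n. 1 - v i \<omega>) \<le> 1" for n using v01 by (auto intro!: prod_le_1)
  show w0: "0 \<le> sb_weight v j \<omega>" for j unfolding sb_weight_def using v01 P0 by (auto intro!: mult_nonneg_nonneg)
  show "sb_weight v j \<omega> \<le> v j \<omega>" for j unfolding sb_weight_def
    using mult_left_mono[OF P1[of j], of "v j \<omega>"] v01[of j] by simp
  show S: "(\<Sum>j<n. sb_weight v j \<omega>) = 1 - (\<Prod>i<n. 1 - v i \<omega>)" for n by (rule sum_sb_weight)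
  have le: "(\<Sum>j<n. sb_weight v j \<omega>) \<le> 1" for n using S P0 by simp
  show sm: "summable (\<lambda>j. sb_weight v j \<omega>)" by (rule summableI_nonneg_bounded[OF w0 le])
  show "(\<Sum>j. sb_weight v j \<omega>) \<le> 1" by (rule suminf_le_const[OF sm le])
qed

lemma approx_prefix:
  fixes w F :: "nat \<Rightarrow> real"
  assumes w0: "\<And>j. 0 \<le> w j" and sw: "summable w" and s1: "suminf w \<le> 1"
    and FB: "\<And>j. \<bar>F j\<bar> \<le> B" and cB: "\<bar>c0\<bar> \<le> B"
  shows "\<bar>(\<Sum>j. w j * F j) + (1 - suminf w) * c0 - (\<Sum>j<N. w j * F j)\<bar> \<le> B * (1 - (\<Sum>j<N. w j))"
proof -
  have B0: "0 \<le> B" using FB[of 0] by simp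
  have swF: "summable (\<lambda>j. w j * F j)"
  proof (rule summable_comparison_test)
    show "\<exists>N. \<forall>n\<ge>N. norm (w n * F n) \<le> B * w n"
    proof (intro exI allI impI)
      fix n :: nat
      have "norm (w n * F n) = w n * \<bar>F n\<bar>" using w0[of n] by (simp add: abs_mult)
      also have "\<dots> \<le> w n * B" by (rule mult_left_mono[OF FB w0])
      finally show "norm (w n * F n) \<le> B * w n" by (simp add: mult.commute)
    qed
    show "summable (\<lambda>n. B * w n)" using sw by (rule summable_mult)
  qed
  have sp1: "(\<Sum>j. w j * F j) = (\<Sum>n. w (n + N) * F (n + N)) + (\<Sum>j<N. w j * F j)"
    by (rule suminf_split_initial_segment[OF swF])
  have sp2: "suminf w = (\<Sum>n. w (n + N)) + (\<Sum>j<N. w j)"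
    by (rule suminf_split_initial_segment[OF sw])
  have st1: "summable (\<lambda>n. w (n + N) * F (n + N))" using swF by (rule summable_ignore_initial_segment)
  have st2: "summable (\<lambda>n. w (n + N))" using sw by (rule summable_ignore_initial_segment)
  have stB: "summable (\<lambda>n. B * w (n + N))" using st2 by (rule summable_mult)
  have u: "(\<Sum>n. w (n + N) * F (n + N)) \<le> (\<Sum>n. B * w (n + N))"
  proof (rule suminf_le[OF _ st1 stB])
    fix n
    have "w (n + N) * F (n + N) \<le> \<bar>w (n + N) * F (n + N)\<bar>" by simp
    also have "\<dots> = w (n + N) * \<bar>F (n + N)\<bar>" using w0 by (simp add: abs_mult)
    also have "\<dots> \<le> w (n + N) * B" using w0 FB by (intro mult_left_mono) auto
    finally show "w (n + N) * F (n + N) \<le> B * w (n + N)" by (simp add: mult.commute)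
  qed
  have l: "- (\<Sum>n. B * w (n + N)) \<le> (\<Sum>n. w (n + N) * F (n + N))"
  proof -
    have "(\<Sum>n. - (w (n + N) * F (n + N))) \<le> (\<Sum>n. B * w (n + N))"
    proof (rule suminf_le)
      fix n
      have "- (w (n + N) * F (n + N)) \<le> \<bar>w (n + N) * F (n + N)\<bar>" by simp
      also have "\<dots> = w (n + N) * \<bar>F (n + N)\<bar>" using w0 by (simp add: abs_mult)
      also have "\<dots> \<le> w (n + N) * B" using w0 FB by (intro mult_left_mono) auto
      finally show "- (w (n + N) * F (n + N)) \<le> B * w (n + N)" by (simp add: mult.commute)
    qed (use st1 stB in \<open>auto intro: summable_minus\<close>)
    then show ?thesis using suminf_minus[OF st1] by simp
  qed
  have tB: "(\<Sum>n. B * w (n + N)) = B * (suminf w - (\<Sum>j<N. w j))"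
    using suminf_mult[OF st2, of B] sp2 by simp
  have c: "\<bar>(1 - suminf w) * c0\<bar> \<le> (1 - suminf w) * B"
    using s1 cB by (simp add: abs_mult mult_left_mono)
  have "\<bar>(\<Sum>n. w (n + N) * F (n + N))\<bar> \<le> B * (suminf w - (\<Sum>j<N. w j))" using u l tB by linarith
  then show ?thesis using c unfolding sp1 by (simp add: algebra_simps) linarith?
qed

locale esb =
  fixes M :: "'w measure" and \<mu>0 :: "'a::polish_space measure" and v :: "nat \<Rightarrow> 'w \<Rightarrow> real"
    and \<xi> :: "nat \<Rightarrow> 'w \<Rightarrow> 'a" and a b :: real
  assumes M: "prob_space M" and P0: "prob_space \<mu>0" and S0: "sets \<mu>0 = sets borel"
    and ab: "a > 0" "b > 0" and ex: "exchangeable M v"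
    and v01: "\<And>i \<omega>. \<omega> \<in> space M \<Longrightarrow> v i \<omega> \<in> {0..1}"
    and dist: "\<And>i. distributed M lborel (v i) (\<lambda>x. ennreal (beta_density a b x))"
    and indxi: "prob_space.indep_vars M (\<lambda>_. \<mu>0) \<xi> UNIV"
    and dxi: "\<And>i. distr M \<mu>0 (\<xi> i) = \<mu>0"
    and irv: "indep_rv M (PiM UNIV (\<lambda>_. borel)) (\<lambda>\<omega> j. sb_weight v j \<omega>) (PiM UNIV (\<lambda>_. \<mu>0)) (\<lambda>\<omega> j. \<xi> j \<omega>)"
begin

lemma sp0: "space \<mu>0 = UNIV"
  using sets_eq_imp_space_eq[OF S0] by simp

lemma vm: "v i \<in> borel_measurable M"
  using ex by (simp add: exchangeable_def)

lemma xim: "\<xi> i \<in> measurable M \<mu>0"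
  using indxi unfolding prob_space.indep_vars_def2[OF M] by blast

lemma xim_borel: "\<xi> i \<in> borel_measurable M"
  using xim[of i] S0 by (simp cong: measurable_cong_sets)

lemma xi_prob: "A \<in> sets \<mu>0 \<Longrightarrow> emeasure M (\<xi> i -` A \<inter> space M) = emeasure \<mu>0 A"
  using emeasure_distr[OF xim, of A i] dxi[of i] by simp

lemma integral_formula:
  assumes \<omega>: "\<omega> \<in> space M" and fc: "continuous_on UNIV f" and fB: "\<And>y. \<bar>f y\<bar> \<le> B"
  shows "integral\<^sup>L (ssp_measure \<mu>0 (\<lambda>j. sb_weight v j \<omega>) (\<lambda>j. \<xi> j \<omega>)) f =
    (\<Sum>j. sb_weight v j \<omega> * f (\<xi> j \<omega>)) + (1 - (\<Sum>j. sb_weight v j \<omega>)) * integral\<^sup>L \<mu>0 f"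
proof -
  have x01: "\<And>i. v i \<omega> \<in> {0..1}" using v01 \<omega> by auto
  note W = weights_basic[of v \<omega>, OF x01]
  show ?thesis
  proof (rule ssp_integral[OF P0])
    show "f \<in> borel_measurable \<mu>0"
      using borel_measurable_continuous_onI[OF fc] S0 by (simp cong: measurable_cong_sets)
  qed (use W fB sp0 in auto)
qed

lemma fwd:
  assumes P\<nu>: "prob_space \<nu>" and S\<nu>: "sets \<nu> = sets borel"
    and L: "in_law_support M (\<lambda>\<omega>. ssp_measure \<mu>0 (\<lambda>j. sb_weight v j \<omega>) (\<lambda>j. \<xi> j \<omega>)) \<nu>"
  shows "msupport \<nu> \<subseteq> msupport \<mu>0"
proof
  interpret prob_space M by (rule M)
  interpret N: prob_space \<nu> by (rule P\<nu>)
  interpret Z: prob_space \<mu>0 by (rule P0)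
  fix x assume x\<nu>: "x \<in> msupport \<nu>"
  show "x \<in> msupport \<mu>0"
  proof (rule ccontr)
    assume "x \<notin> msupport \<mu>0"
    then obtain U where U: "open U" "x \<in> U" "\<not> emeasure \<mu>0 U > 0" unfolding msupport_def by auto
    then have U0: "emeasure \<mu>0 U = 0" by (simp add: zero_less_iff_neq_zero)
    have Us: "U \<in> sets \<mu>0" using U(1) S0 by simp
    obtain r where r: "r > 0" "ball x r \<subseteq> U" using U(1,2) open_contains_ball by blast
    define f where "f y = max 0 (1 - dist y x / r)" for y
    have fc: "continuous_on UNIV f" unfolding f_def using r by (intro continuous_intros) auto
    have fB: "\<bar>f y\<bar> \<le> 1" for y unfolding f_def using r by auto
    have f0: "f y = 0" if "y \<notin> U" for y
    proof -
      have "y \<notin> ball x r" using that r by auto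
      then have "r \<le> dist y x" by (simp add: dist_commute)
      then show ?thesis unfolding f_def using r by auto
    qed
    have fhalf: "1/2 \<le> f y" if "y \<in> ball x (r/2)" for y
    proof -
      have "dist y x < r / 2" using that by (simp add: dist_commute)
      then have "dist y x / r < 1/2" using r by (simp add: divide_less_eq)
      then have "1/2 \<le> 1 - dist y x / r" by linarith
      then show ?thesis unfolding f_def by (simp add: le_max_iff_disj)
    qed
    have fm: "f \<in> borel_measurable borel" by (rule borel_measurable_continuous_onI[OF fc])
    have fm\<nu>: "f \<in> borel_measurable \<nu>" using fm S\<nu> by (simp cong: measurable_cong_sets)
    have fm0: "f \<in> borel_measurable \<mu>0" using fm S0 by (simp cong: measurable_cong_sets)
    have bs: "ball x (r/2) \<in> sets \<nu>" using S\<nu> by simp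
    have "emeasure \<nu> (ball x (r/2)) > 0" using x\<nu> r unfolding msupport_def by auto
    then have mb: "measure \<nu> (ball x (r/2)) > 0" by (simp add: N.emeasure_eq_measure)
    define c where "c = integral\<^sup>L \<nu> f"
    have "(1/2) * measure \<nu> (ball x (r/2)) = integral\<^sup>L \<nu> (\<lambda>y. (1/2::real) * indicator (ball x (r/2)) y)"
      using bs by simp
    also have "\<dots> \<le> integral\<^sup>L \<nu> f"
    proof (rule integral_mono)
      show "integrable \<nu> (\<lambda>y. (1/2::real) * indicator (ball x (r/2)) y)"
        using bs by (intro integrable_mult_right integrable_real_indicator) (auto simp: N.emeasure_eq_measure)
      show "integrable \<nu> f" by (rule N.integrable_const_bound[where B=1]) (use fB fm\<nu> in auto)
      fix y show "(1/2::real) * indicator (ball x (r/2)) y \<le> f y"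
        using fhalf[of y] by (auto simp: indicator_def f_def)
    qed
    finally have c0: "c > 0" unfolding c_def using mb by linarith
    have fbd: "bounded (range f)" unfolding bounded_iff using fB by auto
    define A where "A = {\<omega> \<in> space M. \<bar>integral\<^sup>L (ssp_measure \<mu>0 (\<lambda>j. sb_weight v j \<omega>) (\<lambda>j. \<xi> j \<omega>)) f - c\<bar> < c}"
    have fcf: "\<forall>i<1. continuous_on UNIV ((\<lambda>_. f) i) \<and> bounded (range ((\<lambda>_. f) i))" using fc fbd by simp
    from L[unfolded in_law_support_def, THEN spec, THEN spec, THEN spec, of 1 "\<lambda>_. f" c, THEN mp, OF fcf, THEN mp, OF c0]
    have pos: "measure M A > 0" by (simp add: less_one A_def c_def)
    define Nul where "Nul = (\<Union>j. \<xi> j -` U \<inter> space M)"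
    have Nn: "Nul \<in> null_sets M"
      unfolding Nul_def
    proof (rule null_sets_UN)
      fix j
      have "\<xi> j -` U \<inter> space M \<in> sets M" by (rule measurable_sets[OF xim Us])
      moreover have "emeasure M (\<xi> j -` U \<inter> space M) = 0" using xi_prob[OF Us] U0 by simp
      ultimately show "\<xi> j -` U \<inter> space M \<in> null_sets M" by (simp add: null_sets_def)
    qed
    have int0: "integral\<^sup>L \<mu>0 f = 0"
    proof -
      have "AE y in \<mu>0. y \<notin> U" using U0 Us by (intro AE_I'[of U]) (auto simp: null_sets_def)
      then have "AE y in \<mu>0. f y = 0" by eventually_elim (simp add: f0)
      then have "integral\<^sup>L \<mu>0 f = integral\<^sup>L \<mu>0 (\<lambda>_. 0)" by (intro integral_cong_AE) (use fm0 in auto)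
      then show ?thesis by simp
    qed
    have sub: "A \<subseteq> Nul"
    proof
      fix \<omega> assume \<omega>: "\<omega> \<in> A"
      show "\<omega> \<in> Nul"
      proof (rule ccontr)
        assume "\<omega> \<notin> Nul"
        then have nU: "\<xi> j \<omega> \<notin> U" for j using \<omega> by (auto simp: Nul_def A_def)
        have "integral\<^sup>L (ssp_measure \<mu>0 (\<lambda>j. sb_weight v j \<omega>) (\<lambda>j. \<xi> j \<omega>)) f = 0"
          using integral_formula[of \<omega> f 1] \<omega> fc fB by (simp add: f0[OF nU] int0 A_def)
        then show False using \<omega> c0 by (simp add: A_def)
      qed
    qed
    have "emeasure M A \<le> emeasure M Nul"
      by (rule emeasure_mono[OF sub]) (use Nn in \<open>simp add: null_sets_def\<close>)
    then have "emeasure M A = 0"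
      using Nn by (simp add: null_sets_def)
    then show False using pos by (simp add: measure_def)
  qed
qed

end

context esb begin

lemma bwd:
  assumes P\<nu>: "prob_space \<nu>" and S\<nu>: "sets \<nu> = sets borel" and sub: "msupport \<nu> \<subseteq> msupport \<mu>0"
  shows "in_law_support M (\<lambda>\<omega>. ssp_measure \<mu>0 (\<lambda>j. sb_weight v j \<omega>) (\<lambda>j. \<xi> j \<omega>)) \<nu>"
  unfolding in_law_support_def
proof (intro allI impI)
  interpret prob_space M by (rule M)
  interpret Z: prob_space \<mu>0 by (rule P0)
  fix k and f :: "nat \<Rightarrow> 'a \<Rightarrow> real" and e :: real
  assume fcb: "\<forall>i<k. continuous_on UNIV (f i) \<and> bounded (range (f i))" and e0: "e > 0"
  have fc: "\<And>i. i < k \<Longrightarrow> continuous_on UNIV (f i)" using fcb by blast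
  have fb: "\<And>i. i < k \<Longrightarrow> bounded (range (f i))" using fcb by blast
  obtain B where BB: "0 \<le> B \<and> (\<forall>i<k. \<forall>y. \<bar>f i y\<bar> \<le> B)" using bound_family[OF fb] ..
  have B0: "0 \<le> B" using BB by (rule conjunct1)
  have B: "\<And>i y. i < k \<Longrightarrow> \<bar>f i y\<bar> \<le> B" using BB[THEN conjunct2] by simp
  have e4: "0 < e / 4" using e0 by simp
  obtain X where "\<exists>p. finite X \<and> X \<subseteq> msupport \<nu> \<and> (\<forall>x\<in>X. 0 \<le> p x) \<and> sum p X = 1 \<and>
           (\<forall>i<k. \<bar>(\<Sum>x\<in>X. p x * f i x) - integral\<^sup>L \<nu> (f i)\<bar> \<le> e / 4)"
    using discretize[OF P\<nu> S\<nu> fc fb e4] ..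
  then obtain p where XX: "finite X \<and> X \<subseteq> msupport \<nu> \<and> (\<forall>x\<in>X. 0 \<le> p x) \<and> sum p X = 1 \<and>
           (\<forall>i<k. \<bar>(\<Sum>x\<in>X. p x * f i x) - integral\<^sup>L \<nu> (f i)\<bar> \<le> e / 4)" ..
  note X = XX[THEN conjunct1] XX[THEN conjunct2, THEN conjunct1] XX[THEN conjunct2, THEN conjunct2, THEN conjunct1]
    XX[THEN conjunct2, THEN conjunct2, THEN conjunct2, THEN conjunct1] XX[THEN conjunct2, THEN conjunct2, THEN conjunct2, THEN conjunct2]
  have Xne: "X \<noteq> {}" using X(4) by (metis sum.empty zero_neq_one)
  define m where "m = card X"
  define \<delta> where "\<delta> = min (1/2) (e / (8 * (B + 1) * (2 * real m + 2)))"
  have \<delta>0: "0 < \<delta>" using e0 B0 by (simp add: \<delta>_def)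
  have \<delta>1: "\<delta> \<le> 1/2" unfolding \<delta>_def by (rule min.cobounded1)
  have \<delta>B: "B * \<delta> * (2 * real m + 2) \<le> e / 8"
  proof -
    have pos: "0 < 8 * (B + 1) * (2 * real m + 2)" using B0 by simp
    have "\<delta> \<le> e / (8 * (B + 1) * (2 * real m + 2))" by (simp add: \<delta>_def)
    then have "\<delta> * (8 * (B + 1) * (2 * real m + 2)) \<le> e" using pos by (simp add: pos_le_divide_eq)
    moreover have "\<delta> * (8 * (B + 1) * (2 * real m + 2)) = 8 * ((B + 1) * \<delta> * (2 * real m + 2))" by (simp add: algebra_simps)
    moreover have "B * \<delta> * (2 * real m + 2) \<le> (B + 1) * \<delta> * (2 * real m + 2)"
      using \<delta>0 by (intro mult_right_mono) auto
    ultimately show ?thesis by linarith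
  qed
  define \<eta> where "\<eta> = \<delta> / 2"
  have \<eta>: "0 < \<eta>" "\<eta> < \<delta>" "\<delta> < 1" using \<delta>0 \<delta>1 by (auto simp: \<eta>_def)
  obtain N where N: "(1 - \<eta>) ^ N < \<delta>"
  proof -
    have "(\<lambda>n. (1 - \<eta>) ^ n) \<longlonglongrightarrow> 0" by (rule LIMSEQ_power_zero) (use \<eta> in simp)
    then have "eventually (\<lambda>n. (1 - \<eta>) ^ n < \<delta>) sequentially" using \<delta>0 by (rule order_tendstoD(2))
    then show ?thesis using that by (auto simp: eventually_sequentially)
  qed
  have N0: "0 < N" using N \<eta> by (cases N) auto
  define I where "I = {\<eta>..\<delta>}"
  define V where "V = {\<omega> \<in> space M. \<forall>j<N. v j \<omega> \<in> I}"
  have Vpos: "emeasure M V > 0"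
  proof -
    define q where "q = (\<integral>\<^sup>+x. ennreal (beta_density a b x) * indicator I x \<partial>lborel)"
    have qj: "emeasure M (v j -` I \<inter> space M) = q" for j
      unfolding q_def by (rule distributed_emeasure[OF dist]) (simp add: I_def)
    have q0: "q > 0" using beta_interval_pos[OF dist[of 0] ab \<eta>] qj[of 0] by (simp add: I_def)
    show ?thesis unfolding V_def by (rule joint_pos[OF M ex _ qj q0]) (simp add: I_def)
  qed
  define U where "U x = (\<Inter>i\<in>{..<k}. f i -` ball (f i x) (e/4))" for x
  have Uopen: "open (U x)" for x
    unfolding U_def by (intro open_INT ballI open_vimage open_ball fc) auto
  have Umem: "y \<in> U x \<longleftrightarrow> (\<forall>i<k. \<bar>f i y - f i x\<bar> < e/4)" for x y
    unfolding U_def by (auto simp: dist_real_def abs_minus_commute)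
  have xU: "x \<in> U x" for x using e0 by (simp add: Umem)
  have Us: "U x \<in> sets \<mu>0" for x using Uopen[of x] S0 by simp
  have Upos: "emeasure \<mu>0 (U x) > 0" if "x \<in> X" for x
  proof -
    have "x \<in> msupport \<mu>0" using that X(2) sub by blast
    then show ?thesis using Uopen[of x] xU[of x] unfolding msupport_def by blast
  qed
  define G where "G = (\<Pi>\<^sub>E j\<in>{..<N}. X)"
  have fG: "finite G" unfolding G_def using X(1) by (simp add: finite_PiE)
  define BW where "BW g = {w :: nat \<Rightarrow> real. (\<forall>j<N. 0 \<le> w j \<and> w j \<le> \<delta>) \<and> 1 - (\<Sum>j<N. w j) \<le> \<delta> \<and>
      (\<Sum>x\<in>X. \<bar>(\<Sum>j\<in>{j\<in>{..<N}. g j = x}. w j) - p x\<bar>) \<le> (2 * real m + 1) * \<delta>}" for g :: "nat \<Rightarrow> 'a"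
  have comp[measurable]: "(\<lambda>w::nat\<Rightarrow>real. w j) \<in> borel_measurable (PiM UNIV (\<lambda>_. borel))" for j
    by (rule measurable_component_singleton) simp
  have BWm: "BW g \<in> sets (PiM UNIV (\<lambda>_. borel))" for g
  proof -
    have "BW g = {w \<in> space (PiM UNIV (\<lambda>_. borel)). (\<forall>j<N. 0 \<le> w j \<and> w j \<le> \<delta>) \<and> 1 - (\<Sum>j<N. w j) \<le> \<delta> \<and>
      (\<Sum>x\<in>X. \<bar>(\<Sum>j\<in>{j\<in>{..<N}. g j = x}. w j) - p x\<bar>) \<le> (2 * real m + 1) * \<delta>}"
      by (auto simp: BW_def space_PiM)
    also have "\<dots> \<in> sets (PiM UNIV (\<lambda>_. borel))" by measurable
    finally show ?thesis .
  qed
  define Wv where "Wv = (\<lambda>\<omega> j. sb_weight v j \<omega>)"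
  define Xv where "Xv = (\<lambda>\<omega> j. \<xi> j \<omega>)"
  have irv': "Wv \<in> measurable M (PiM UNIV (\<lambda>_. borel))" "Xv \<in> measurable M (PiM UNIV (\<lambda>_. \<mu>0))"
    "indep_set (sigma_sets (space M) {Wv -` A \<inter> space M | A. A \<in> sets (PiM UNIV (\<lambda>_. borel))})
       (sigma_sets (space M) {Xv -` A \<inter> space M | A. A \<in> sets (PiM UNIV (\<lambda>_. \<mu>0))})"
    using irv unfolding indep_rv_def Wv_def Xv_def by auto
  define WG where "WG g = Wv -` BW g \<inter> space M" for g
  have WGm: "WG g \<in> sets M" for g unfolding WG_def by (rule measurable_sets[OF irv'(1) BWm])
  have VWG: "V \<subseteq> (\<Union>g\<in>G. WG g)"
  proof
    fix \<omega> assume \<omega>: "\<omega> \<in> V"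
    then have \<omega>s: "\<omega> \<in> space M" and vI: "\<And>j. j < N \<Longrightarrow> v j \<omega> \<in> I" by (auto simp: V_def)
    have x01: "\<And>i. v i \<omega> \<in> {0..1}" using v01 \<omega>s by auto
    note W = weights_basic[of v \<omega>, OF x01]
    have wle: "sb_weight v j \<omega> \<le> \<delta>" if "j < N" for j using W(2)[of j] vI[OF that] by (auto simp: I_def)
    have Rle: "(\<Prod>i<N. 1 - v i \<omega>) \<le> \<delta>"
    proof -
      have "(\<Prod>i<N. 1 - v i \<omega>) \<le> (\<Prod>i<N. 1 - \<eta>)"
        by (rule prod_mono) (use vI x01 in \<open>auto simp: I_def\<close>)
      then show ?thesis using N by simp
    qed
    have S: "(\<Sum>j<N. sb_weight v j \<omega>) = 1 - (\<Prod>i<N. 1 - v i \<omega>)" by (rule W(3))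
    have Sle: "\<bar>(\<Sum>j<N. sb_weight v j \<omega>) - sum p X\<bar> \<le> \<delta>" using S Rle W(4)[of N] X(4) by simp
    obtain g0 where g0: "\<forall>j\<in>{..<N}. g0 j \<in> X"
      "(\<Sum>x\<in>X. \<bar>(\<Sum>j\<in>{j\<in>{..<N}. g0 j = x}. sb_weight v j \<omega>) - p x\<bar>) \<le>
         2 * real (card X) * \<delta> + \<bar>(\<Sum>j<N. sb_weight v j \<omega>) - sum p X\<bar>"
      using greedy_assign[OF X(1) Xne, of "{..<N}" "\<lambda>j. sb_weight v j \<omega>" \<delta> p] W(1) wle \<delta>0 X(3) by auto
    define g where "g = restrict g0 {..<N}"
    have gG: "g \<in> G" using g0(1) by (auto simp: G_def g_def)
    have geq: "{j\<in>{..<N}. g j = x} = {j\<in>{..<N}. g0 j = x}" for x by (auto simp: g_def)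
    have "(\<Sum>x\<in>X. \<bar>(\<Sum>j\<in>{j\<in>{..<N}. g j = x}. sb_weight v j \<omega>) - p x\<bar>) \<le> (2 * real m + 1) * \<delta>"
      using g0(2) Sle unfolding geq m_def by (simp add: algebra_simps)
    moreover have "1 - (\<Sum>j<N. sb_weight v j \<omega>) \<le> \<delta>" using S Rle by simp
    ultimately have "Wv \<omega> \<in> BW g" using W(1) wle unfolding BW_def Wv_def by auto
    then show "\<omega> \<in> (\<Union>g\<in>G. WG g)" using gG \<omega>s unfolding WG_def by auto
  qed
  have "\<exists>g\<in>G. emeasure M (WG g) > 0"
  proof (rule ccontr)
    assume "\<not> ?thesis"
    then have "WG g \<in> null_sets M" if "g \<in> G" for g
      using that WGm by (auto simp: null_sets_def zero_less_iff_neq_zero)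
    then have "(\<Union>g\<in>G. WG g) \<in> null_sets M" by (intro null_sets_UN') (auto simp: countable_finite fG)
    moreover have "V \<in> sets M"
    proof -
      note [measurable] = vm
      have "V = {\<omega> \<in> space M. \<forall>j\<in>{..<N}. v j \<omega> \<in> I}" by (auto simp: V_def)
      also have "\<dots> \<in> sets M" unfolding I_def by measurable
      finally show ?thesis .
    qed
    ultimately have "V \<in> null_sets M" using VWG null_sets_subset by blast
    then show False using Vpos by (simp add: null_sets_def)
  qed
  then obtain g where gG: "g \<in> G" and WGpos: "emeasure M (WG g) > 0" by blast
  have gX: "g j \<in> X" if "j < N" for j using gG that by (auto simp: G_def)
  define BX where "BX = {y :: nat \<Rightarrow> 'a. \<forall>j<N. y j \<in> U (g j)}"
  have BXm: "BX \<in> sets (PiM UNIV (\<lambda>_. \<mu>0))"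
  proof -
    have "BX = {y \<in> space (PiM UNIV (\<lambda>_. \<mu>0)). \<forall>j\<in>{..<N}. y j \<in> U (g j)}"
      by (auto simp: BX_def space_PiM sp0)
    also have "\<dots> \<in> sets (PiM UNIV (\<lambda>_. \<mu>0))"
    proof (rule sets.sets_Collect_finite_All)
      fix j
      have "(\<lambda>y::nat\<Rightarrow>'a. y j) \<in> measurable (PiM UNIV (\<lambda>_. \<mu>0)) \<mu>0"
        by (rule measurable_component_singleton) simp
      from measurable_sets[OF this Us[of "g j"]]
      show "{y \<in> space (PiM UNIV (\<lambda>_. \<mu>0)). y j \<in> U (g j)} \<in> sets (PiM UNIV (\<lambda>_. \<mu>0))"
        by (simp add: vimage_def Int_def conj_commute)
    qed simp
    finally show ?thesis .
  qed
  define XI where "XI = Xv -` BX \<inter> space M"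
  have XIeq: "XI = (\<Inter>j\<in>{..<N}. \<xi> j -` U (g j) \<inter> space M)"
    using N0 by (auto simp: XI_def Xv_def BX_def)
  have pXI: "prob XI = (\<Prod>j\<in>{..<N}. prob (\<xi> j -` U (g j) \<inter> space M))"
    unfolding XIeq by (rule indep_varsD[OF indxi]) (use N0 Us in auto)
  have pj: "prob (\<xi> j -` U (g j) \<inter> space M) > 0" if "j < N" for j
  proof -
    have "emeasure M (\<xi> j -` U (g j) \<inter> space M) > 0" using xi_prob[OF Us] Upos[OF gX[OF that]] by simp
    then show ?thesis by (simp add: emeasure_eq_measure)
  qed
  have pXI0: "prob XI > 0" unfolding pXI by (rule prod_pos) (use pj in auto)
  have indep: "prob (WG g \<inter> XI) = prob (WG g) * prob XI"
    by (rule indep_setD[OF irv'(3)]) (auto simp: WG_def XI_def intro!: sigma_sets.Basic BWm BXm)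
  have pWG: "prob (WG g) > 0" using WGpos by (simp add: emeasure_eq_measure)
  have ppos: "prob (WG g \<inter> XI) > 0" using indep pWG pXI0 by simp
  define c\<nu> where "c\<nu> i = integral\<^sup>L \<nu> (f i)" for i
  define \<Phi> where "\<Phi> i \<omega> = (\<Sum>j. sb_weight v j \<omega> * f i (\<xi> j \<omega>)) + (1 - (\<Sum>j. sb_weight v j \<omega>)) * integral\<^sup>L \<mu>0 (f i)" for i \<omega>
  have Aeq: "{\<omega> \<in> space M. \<forall>i<k. \<bar>(\<integral>x. f i x \<partial>ssp_measure \<mu>0 (\<lambda>j. sb_weight v j \<omega>) (\<lambda>j. \<xi> j \<omega>)) - (\<integral>x. f i x \<partial>\<nu>)\<bar> < e}
      = {\<omega> \<in> space M. \<forall>i\<in>{..<k}. i < k \<longrightarrow> \<bar>\<Phi> i \<omega> - c\<nu> i\<bar> < e}"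
  proof (rule Collect_cong)
    fix \<omega>
    have "\<omega> \<in> space M \<Longrightarrow> i < k \<Longrightarrow> (\<integral>x. f i x \<partial>ssp_measure \<mu>0 (\<lambda>j. sb_weight v j \<omega>) (\<lambda>j. \<xi> j \<omega>)) = \<Phi> i \<omega>" for i
      unfolding \<Phi>_def by (rule integral_formula[OF _ fc B])
    then show "(\<omega> \<in> space M \<and> (\<forall>i<k. \<bar>(\<integral>x. f i x \<partial>ssp_measure \<mu>0 (\<lambda>j. sb_weight v j \<omega>) (\<lambda>j. \<xi> j \<omega>)) - (\<integral>x. f i x \<partial>\<nu>)\<bar> < e))
      = (\<omega> \<in> space M \<and> (\<forall>i\<in>{..<k}. i < k \<longrightarrow> \<bar>\<Phi> i \<omega> - c\<nu> i\<bar> < e))"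
      by (auto simp: c\<nu>_def)
  qed
  have Am: "{\<omega> \<in> space M. \<forall>i\<in>{..<k}. i < k \<longrightarrow> \<bar>\<Phi> i \<omega> - c\<nu> i\<bar> < e} \<in> sets M"
  proof (rule sets.sets_Collect_finite_All)
    fix i show "{\<omega> \<in> space M. i < k \<longrightarrow> \<bar>\<Phi> i \<omega> - c\<nu> i\<bar> < e} \<in> sets M"
    proof (cases "i < k")
      case True
      have fim[measurable]: "f i \<in> borel_measurable borel" by (rule borel_measurable_continuous_onI[OF fc[OF True]])
      note [measurable] = vm xim_borel
      have [measurable]: "\<Phi> i \<in> borel_measurable M" unfolding \<Phi>_def sb_weight_def by measurable
      show ?thesis by measurable
    qed simp
  qed simp
  have subset: "WG g \<inter> XI \<subseteq> {\<omega> \<in> space M. \<forall>i\<in>{..<k}. i < k \<longrightarrow> \<bar>\<Phi> i \<omega> - c\<nu> i\<bar> < e}"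
  proof (intro subsetI CollectI conjI ballI impI)
    fix \<omega> assume \<omega>: "\<omega> \<in> WG g \<inter> XI"
    then show "\<omega> \<in> space M" by (auto simp: WG_def)
  next
    fix \<omega> i assume \<omega>: "\<omega> \<in> WG g \<inter> XI" and "i \<in> {..<k}" and ik: "i < k"
    have \<omega>s: "\<omega> \<in> space M" and wB: "Wv \<omega> \<in> BW g" and xiB: "Xv \<omega> \<in> BX"
      using \<omega> by (auto simp: WG_def XI_def)
    have xiU: "\<xi> j \<omega> \<in> U (g j)" if "j < N" for j using xiB that by (auto simp: BX_def Xv_def)
    have x01: "\<And>i. v i \<omega> \<in> {0..1}" using v01 \<omega>s by auto
    note W = weights_basic[of v \<omega>, OF x01]
    define w where "w = (\<lambda>j. sb_weight v j \<omega>)"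
    have w0: "\<And>j. 0 \<le> w j" using W(1) by (simp add: w_def)
    have wB': "1 - (\<Sum>j<N. w j) \<le> \<delta>" "(\<Sum>x\<in>X. \<bar>(\<Sum>j\<in>{j\<in>{..<N}. g j = x}. w j) - p x\<bar>) \<le> (2 * real m + 1) * \<delta>"
      using wB by (auto simp: BW_def Wv_def w_def)
    have wS: "0 \<le> (\<Sum>j<N. w j)" "(\<Sum>j<N. w j) \<le> 1" using W(3)[of N] W(4)[of N] W(5)[of N] by (simp_all add: w_def)
    define F where "F = (\<lambda>j. f i (\<xi> j \<omega>))"
    define c0 where "c0 = integral\<^sup>L \<mu>0 (f i)"
    have FB: "\<bar>F j\<bar> \<le> B" for j using B[OF ik] by (simp add: F_def)
    have c0B: "\<bar>c0\<bar> \<le> B"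
    proof -
      have fim: "f i \<in> borel_measurable \<mu>0"
        using borel_measurable_continuous_onI[OF fc[OF ik]] S0 by (simp cong: measurable_cong_sets)
      have int: "integrable \<mu>0 (f i)" by (rule Z.integrable_const_bound[where B=B]) (use B[OF ik] fim in auto)
      have "c0 \<le> integral\<^sup>L \<mu>0 (\<lambda>_. B)" unfolding c0_def
        by (rule integral_mono[OF int]) (use B[OF ik] in \<open>auto simp: abs_le_iff\<close>)
      moreover have "integral\<^sup>L \<mu>0 (\<lambda>_. - B) \<le> c0" unfolding c0_def
      proof (rule integral_mono[OF _ int])
        fix y
        have "\<bar>f i y\<bar> \<le> B" by (rule B[OF ik])
        then show "- B \<le> f i y" by linarith
      qed simp
      ultimately show ?thesis by (simp add: Z.prob_space abs_le_iff)
    qed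
    have Phi: "\<Phi> i \<omega> = (\<Sum>j. w j * F j) + (1 - suminf w) * c0"
      by (simp add: \<Phi>_def w_def F_def c0_def)
    have T1: "\<bar>\<Phi> i \<omega> - (\<Sum>j<N. w j * F j)\<bar> \<le> B * \<delta>"
    proof -
      have "\<bar>\<Phi> i \<omega> - (\<Sum>j<N. w j * F j)\<bar> \<le> B * (1 - (\<Sum>j<N. w j))"
        unfolding Phi by (rule approx_prefix[OF w0 _ _ FB c0B]) (use W(6) W(7) in \<open>simp_all add: w_def\<close>)
      also have "\<dots> \<le> B * \<delta>" using wB'(1) B0 by (intro mult_left_mono) auto
      finally show ?thesis .
    qed
    have T2: "\<bar>(\<Sum>j<N. w j * F j) - (\<Sum>j<N. w j * f i (g j))\<bar> \<le> e / 4"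
    proof -
      have "\<bar>(\<Sum>j<N. w j * F j) - (\<Sum>j<N. w j * f i (g j))\<bar> = \<bar>\<Sum>j<N. w j * (F j - f i (g j))\<bar>"
        by (simp add: sum_subtractf right_diff_distrib)
      also have "\<dots> \<le> (\<Sum>j<N. \<bar>w j * (F j - f i (g j))\<bar>)" by (rule sum_abs)
      also have "\<dots> \<le> (\<Sum>j<N. w j * (e / 4))"
      proof (rule sum_mono)
        fix j assume "j \<in> {..<N}"
        then have "\<bar>F j - f i (g j)\<bar> < e / 4" using xiU[of j] Umem ik by (auto simp: F_def)
        then have "\<bar>F j - f i (g j)\<bar> \<le> e / 4" by simp
        then have "w j * \<bar>F j - f i (g j)\<bar> \<le> w j * (e / 4)" using w0[of j] by (rule mult_left_mono)
        then show "\<bar>w j * (F j - f i (g j))\<bar> \<le> w j * (e / 4)" using w0[of j] by (simp add: abs_mult)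
      qed
      also have "\<dots> = (e / 4) * (\<Sum>j<N. w j)" by (simp add: sum_distrib_left mult.commute)
      also have "\<dots> \<le> e / 4" using wS e0 by (intro mult_left_le) auto
      finally show ?thesis .
    qed
    have T3: "(\<Sum>j<N. w j * f i (g j)) = (\<Sum>x\<in>X. (\<Sum>j\<in>{j\<in>{..<N}. g j = x}. w j) * f i x)"
      by (rule regroup) (use gX X(1) in auto)
    have T4: "\<bar>(\<Sum>x\<in>X. (\<Sum>j\<in>{j\<in>{..<N}. g j = x}. w j) * f i x) - (\<Sum>x\<in>X. p x * f i x)\<bar> \<le> B * ((2 * real m + 1) * \<delta>)"
    proof -
      have "\<bar>(\<Sum>x\<in>X. (\<Sum>j\<in>{j\<in>{..<N}. g j = x}. w j) * f i x) - (\<Sum>x\<in>X. p x * f i x)\<bar>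
          = \<bar>\<Sum>x\<in>X. ((\<Sum>j\<in>{j\<in>{..<N}. g j = x}. w j) - p x) * f i x\<bar>"
        by (simp add: sum_subtractf left_diff_distrib)
      also have "\<dots> \<le> (\<Sum>x\<in>X. \<bar>((\<Sum>j\<in>{j\<in>{..<N}. g j = x}. w j) - p x) * f i x\<bar>)" by (rule sum_abs)
      also have "\<dots> \<le> (\<Sum>x\<in>X. \<bar>(\<Sum>j\<in>{j\<in>{..<N}. g j = x}. w j) - p x\<bar> * B)"
      proof (rule sum_mono)
        fix x
        have "\<bar>(\<Sum>j\<in>{j\<in>{..<N}. g j = x}. w j) - p x\<bar> * \<bar>f i x\<bar> \<le> \<bar>(\<Sum>j\<in>{j\<in>{..<N}. g j = x}. w j) - p x\<bar> * B"
          by (rule mult_left_mono[OF B[OF ik]]) simp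
        then show "\<bar>((\<Sum>j\<in>{j\<in>{..<N}. g j = x}. w j) - p x) * f i x\<bar> \<le> \<bar>(\<Sum>j\<in>{j\<in>{..<N}. g j = x}. w j) - p x\<bar> * B"
          by (simp add: abs_mult)
      qed
      also have "\<dots> = B * (\<Sum>x\<in>X. \<bar>(\<Sum>j\<in>{j\<in>{..<N}. g j = x}. w j) - p x\<bar>)"
        by (simp add: sum_distrib_left mult.commute)
      also have "\<dots> \<le> B * ((2 * real m + 1) * \<delta>)" using wB'(2) B0 by (intro mult_left_mono) auto
      finally show ?thesis .
    qed
    have T5: "\<bar>(\<Sum>x\<in>X. p x * f i x) - c\<nu> i\<bar> \<le> e / 4" using X(5) ik by (simp add: c\<nu>_def)
    have "\<bar>\<Phi> i \<omega> - c\<nu> i\<bar> \<le> B * \<delta> + e / 4 + B * ((2 * real m + 1) * \<delta>) + e / 4"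
      using T1 T2 T3 T4 T5 unfolding abs_le_iff by (intro conjI) linarith+
    also have "\<dots> = B * \<delta> * (2 * real m + 2) + e / 2" by (simp add: algebra_simps)
    also have "\<dots> < e" using \<delta>B e0 by linarith
    finally show "\<bar>\<Phi> i \<omega> - c\<nu> i\<bar> < e" .
  qed
  have "prob (WG g \<inter> XI) \<le> measure M {\<omega> \<in> space M. \<forall>i\<in>{..<k}. i < k \<longrightarrow> \<bar>\<Phi> i \<omega> - c\<nu> i\<bar> < e}"
    by (rule finite_measure_mono[OF subset Am])
  then show "measure M {\<omega> \<in> space M. \<forall>i<k. \<bar>(\<integral>x. f i x \<partial>ssp_measure \<mu>0 (\<lambda>j. sb_weight v j \<omega>) (\<lambda>j. \<xi> j \<omega>)) - (\<integral>x. f i x \<partial>\<nu>)\<bar> < e} > 0"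
    unfolding Aeq using ppos by linarith
qed

end

theorem corollary1:
  fixes M :: "'w measure"
    and \<mu>0 :: "'a::polish_space measure"
    and v :: "nat \<Rightarrow> 'w \<Rightarrow> real"
    and \<xi> :: "nat \<Rightarrow> 'w \<Rightarrow> 'a"
    and a b :: real
  assumes "prob_space M"
    and "prob_space \<mu>0" and "sets \<mu>0 = sets borel" and "diffuse \<mu>0"
    and "a > 0" and "b > 0"
    and "exchangeable M v"
    and "\<And>i \<omega>. \<omega> \<in> space M \<Longrightarrow> v i \<omega> \<in> {0..1}"
    and "\<And>i. distributed M lborel (v i) (\<lambda>x. ennreal (beta_density a b x))"
    and "prob_space.indep_vars M (\<lambda>_. \<mu>0) \<xi> UNIV"
    and "\<And>i. distr M \<mu>0 (\<xi> i) = \<mu>0"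
    and "indep_rv M
           (PiM UNIV (\<lambda>_. borel)) (\<lambda>\<omega> j. sb_weight v j \<omega>)
           (PiM UNIV (\<lambda>_. \<mu>0)) (\<lambda>\<omega> j. \<xi> j \<omega>)"
  shows "(AE \<omega> in M. (\<lambda>j. sb_weight v j \<omega>) sums 1)
    \<and> (\<forall>\<nu>. prob_space \<nu> \<and> sets \<nu> = sets borel \<longrightarrow>
          (in_law_support M (\<lambda>\<omega>. ssp_measure \<mu>0 (\<lambda>j. sb_weight v j \<omega>) (\<lambda>j. \<xi> j \<omega>)) \<nu>
           \<longleftrightarrow> msupport \<nu> \<subseteq> msupport \<mu>0))"
proof -
  interpret E: esb M \<mu>0 v \<xi> a b
    using assms by (simp add: esb_def)
  have AE: "AE \<omega> in M. (\<lambda>n. \<Prod>i<n. 1 - v i \<omega>) \<longlonglongrightarrow> 0"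
    by (rule prob_proper[OF assms(1) assms(7) assms(8) beta_AE_pos[OF assms(9)[of 0]]])
  have part1: "AE \<omega> in M. (\<lambda>j. sb_weight v j \<omega>) sums 1"
    using AE
  proof eventually_elim
    case (elim \<omega>)
    have "(\<lambda>n. 1 - (\<Prod>i<n. 1 - v i \<omega>)) \<longlonglongrightarrow> 1 - 0" by (intro tendsto_diff tendsto_const elim)
    then show ?case unfolding sums_def by (simp add: sum_sb_weight)
  qed
  have part2: "\<forall>\<nu>. prob_space \<nu> \<and> sets \<nu> = sets borel \<longrightarrow>
          (in_law_support M (\<lambda>\<omega>. ssp_measure \<mu>0 (\<lambda>j. sb_weight v j \<omega>) (\<lambda>j. \<xi> j \<omega>)) \<nu>
           \<longleftrightarrow> msupport \<nu> \<subseteq> msupport \<mu>0)"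
    using E.fwd E.bwd by blast
  show ?thesis using part1 part2 by blast
qed

end
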